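(* For any $c\in(0,1)$, the manifolds $\mathscr{L}_c$ and $\mathrm{Aut}(\mathbb{D})/_c\mathbb{Z}_2$ are both diffeomorphic to $\mathrm{Aut}(\mathbb{D})/_0\mathbb{Z}_2$.
   Context: $\mathbb{D}$ is the open unit disc and $\mathrm{Aut}(\mathbb{D})$ its holomorphic automorphism group, a smooth real $3$-manifold via the parametrization $\varphi_{\theta,\alpha}(z)=e^{i\theta}\frac{z-\alpha}{1-\overline{\alpha}z}$, $(\theta,\alpha)\in\mathbb{R}\times\mathbb{D}$ (charts $\theta\in(-\pi,\pi)$ and $\theta\in(0,2\pi)$). $\mathbb{G}=\{(z_1+z_2,z_1z_2):z_1,z_2\in\mathbb{D}\}$, and for $c\in(0,1)$, $\mathscr{L}_c=\{(z_1+z_2,z_1z_2): z_1,z_2\in\mathbb{D},\ |\frac{z_1-z_2}{1-\overline{z_1}z_2}|=c\}$, a real $3$-dimensional submanifold of $\mathbb{G}$. For $c\in(0,1)$, $\mathrm{Aut}(\mathbb{D})/_c\mathbb{Z}_2$ denotes the quotient manifold of $\mathrm{Aut}(\mathbb{D})$ by the free properly discontinuous $\mathbb{Z}_2=\{\pm1\}$-action $(-1)\cdot\varphi=\varphi\circ\varphi_c$, where $\varphi_c(z)=\frac{c-z}{1-cz}$; $\mathrm{Aut}(\mathbb{D})/_0\mathbb{Z}_2$ denotes the quotient by the free properly discontinuous action $(-1)\cdot\varphi=\varphi\circ(-\mathrm{id})$, i.e. $((-1)\cdot\varphi)(z)=\varphi(-z)$. *)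

theory Defs
  imports "HOL-Analysis.Analysis" "HOL-Library.FuncSet"
begin

text \<open>A real-valued function is C-infinity on U if it is continuous on U and,
  for every basis direction, the directional (partial) derivative exists on U
  and is again C-infinity on U (greatest fixed point: partials of all orders
  exist and are continuous).\<close>
coinductive smooth_fun :: "'a::euclidean_space set \<Rightarrow> ('a \<Rightarrow> real) \<Rightarrow> bool"
  for U :: "'a set" where
  "continuous_on U g \<Longrightarrow>
   (\<forall>b\<in>Basis. \<exists>h. (\<forall>x\<in>U. ((\<lambda>t. g (x + t *\<^sub>R b)) has_real_derivative h x) (at 0))
                  \<and> smooth_fun U h)
   \<Longrightarrow> smooth_fun U g"

definition smooth_on :: "'a::euclidean_space set \<Rightarrow> ('a \<Rightarrow> 'b::euclidean_space) \<Rightarrow> bool" where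
  "smooth_on U f \<longleftrightarrow> open U \<and> (\<forall>b\<in>Basis. smooth_fun U (\<lambda>x. f x \<bullet> b))"

definition smooth_map :: "'a::euclidean_space set \<Rightarrow> 'b::euclidean_space set \<Rightarrow> ('a \<Rightarrow> 'b) \<Rightarrow> bool" where
  "smooth_map S T f \<longleftrightarrow> f ` S \<subseteq> T \<and>
     (\<forall>x\<in>S. \<exists>U g. open U \<and> x \<in> U \<and> smooth_on U g \<and> (\<forall>y\<in>S \<inter> U. g y = f y))"

definition qcls :: "('a \<Rightarrow> 'a) \<Rightarrow> 'a \<Rightarrow> 'a set" where
  "qcls \<sigma> x = {x, \<sigma> x}"

definition quot :: "'a set \<Rightarrow> ('a \<Rightarrow> 'a) \<Rightarrow> 'a set set" where
  "quot M \<sigma> = qcls \<sigma> ` M"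

text \<open>A map into the quotient manifold M/sigma is smooth iff it locally lifts to a
  smooth map into M (the projection is a local diffeomorphism).\<close>
definition smooth_to_quot ::
  "'a::euclidean_space set \<Rightarrow> 'b::euclidean_space set \<Rightarrow> ('b \<Rightarrow> 'b) \<Rightarrow> ('a \<Rightarrow> 'b set) \<Rightarrow> bool" where
  "smooth_to_quot S M \<sigma> F \<longleftrightarrow> (\<forall>x\<in>S. F x \<in> quot M \<sigma>) \<and>
     (\<forall>x\<in>S. \<exists>U g. open U \<and> x \<in> U \<and> smooth_map (S \<inter> U) M g \<and>
                    (\<forall>y\<in>S \<inter> U. F y = qcls \<sigma> (g y)))"

definition diffeo_sub_quot ::
  "'a::euclidean_space set \<Rightarrow> 'b::euclidean_space set \<Rightarrow> ('b \<Rightarrow> 'b) \<Rightarrow> bool" where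
  "diffeo_sub_quot S M \<sigma> \<longleftrightarrow> (\<exists>F G.
     (\<forall>x\<in>S. F x \<in> quot M \<sigma>) \<and> (\<forall>p\<in>quot M \<sigma>. G p \<in> S) \<and>
     (\<forall>x\<in>S. G (F x) = x) \<and> (\<forall>p\<in>quot M \<sigma>. F (G p) = p) \<and>
     smooth_to_quot S M \<sigma> F \<and> smooth_map M S (G \<circ> qcls \<sigma>))"

definition diffeo_quot_quot ::
  "'a::euclidean_space set \<Rightarrow> ('a \<Rightarrow> 'a) \<Rightarrow> 'b::euclidean_space set \<Rightarrow> ('b \<Rightarrow> 'b) \<Rightarrow> bool" where
  "diffeo_quot_quot M \<sigma> N \<tau> \<longleftrightarrow> (\<exists>F G.
     (\<forall>p\<in>quot M \<sigma>. F p \<in> quot N \<tau>) \<and> (\<forall>q\<in>quot N \<tau>. G q \<in> quot M \<sigma>) \<and>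
     (\<forall>p\<in>quot M \<sigma>. G (F p) = p) \<and> (\<forall>q\<in>quot N \<tau>. F (G q) = q) \<and>
     smooth_to_quot M N \<tau> (F \<circ> qcls \<sigma>) \<and> smooth_to_quot N M \<sigma> (G \<circ> qcls \<tau>))"

definition disc :: "complex set" where
  "disc = ball 0 1"

text \<open>Aut(D) is parametrised by (u, alpha) with u = exp(i theta) on the unit
  circle and alpha in the disc; as a manifold it is the embedded submanifold
  S^1 x D of C x C (equivalently the charts theta in (-pi,pi), (0,2pi)).\<close>
definition AutP :: "(complex \<times> complex) set" where
  "AutP = {(u, a). cmod u = 1 \<and> a \<in> disc}"

definition autf :: "complex \<times> complex \<Rightarrow> complex \<Rightarrow> complex" where
  "autf p = restrict (\<lambda>z. fst p * (z - snd p) / (1 - cnj (snd p) * z)) disc"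

definition phic :: "real \<Rightarrow> complex \<Rightarrow> complex" where
  "phic c z = (complex_of_real c - z) / (1 - complex_of_real c * z)"

definition act_c :: "real \<Rightarrow> complex \<times> complex \<Rightarrow> complex \<times> complex" where
  "act_c c p = (THE q. q \<in> AutP \<and> autf q = restrict (autf p \<circ> phic c) disc)"

definition act_0 :: "complex \<times> complex \<Rightarrow> complex \<times> complex" where
  "act_0 p = (THE q. q \<in> AutP \<and> autf q = restrict (\<lambda>z. autf p (- z)) disc)"

definition Lset :: "real \<Rightarrow> (complex \<times> complex) set" where
  "Lset c = {(z1 + z2, z1 * z2) | z1 z2. z1 \<in> disc \<and> z2 \<in> disc \<and>
              cmod ((z1 - z2) / (1 - cnj z1 * z2)) = c}"

end

theory Submission
  imports Defs
begin
lemma vd_iff: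
  fixes f :: "real \<Rightarrow> complex"
  shows "(f has_vector_derivative D) (at x) \<longleftrightarrow> ((\<lambda>h. (f (x + h) - f x) / complex_of_real h) \<midarrow>0\<rightarrow> D)"
  unfolding has_vector_derivative_complex_iff DERIV_def tendsto_complex_iff
  by (simp add: Re_divide_of_real Im_divide_of_real)

lemma vd_sqrt:
  fixes T F :: "real \<Rightarrow> complex"
  assumes "isCont T 0" "T 0 \<noteq> 0" "eventually (\<lambda>t. T t ^ 2 = F t) (nhds 0)"
    "(F has_vector_derivative F') (at 0)"
  shows "(T has_vector_derivative F' * inverse (2 * T 0)) (at 0)"
proof -
  have F: "((\<lambda>h. (F h - F 0) / complex_of_real h) \<midarrow>0\<rightarrow> F')" using assms(4) vd_iff[of F F' 0] by simp
  have Tl: "((\<lambda>h. T h + T 0) \<longlongrightarrow> 2 * T 0) (at 0)"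
    using assms(1) unfolding isCont_def by (auto intro!: tendsto_eq_intros)
  have Q: "((\<lambda>h. inverse (T h + T 0)) \<longlongrightarrow> inverse (2 * T 0)) (at 0)"
    using Tl assms(2) by (intro tendsto_inverse) auto
  have ev1: "eventually (\<lambda>h. T h + T 0 \<noteq> 0) (at 0)"
    using Tl assms(2) tendsto_imp_eventually_ne by fastforce
  have ev2: "eventually (\<lambda>t. T t ^ 2 = F t) (at 0)"
    using assms(3) unfolding eventually_at_filter by (auto elim: eventually_mono)
  have T0: "T 0 ^ 2 = F 0" using eventually_nhds_x_imp_x[OF assms(3)] by simp
  have EV: "eventually (\<lambda>h. (F h - F 0) / complex_of_real h * inverse (T h + T 0) = (T (0 + h) - T 0) / complex_of_real h) (at 0)"
    using ev1 ev2
  proof eventually_elim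
    case (elim h)
    have "F h - F 0 = (T h - T 0) * (T h + T 0)" using elim T0 by (simp add: power2_eq_square algebra_simps)
    then have "(F h - F 0) / complex_of_real h * inverse (T h + T 0) = (T h - T 0) / complex_of_real h * ((T h + T 0) * inverse (T h + T 0))"
      by (simp add: divide_inverse mult_ac)
    then show ?case using elim by simp
  qed
  have LL: "((\<lambda>h. (F h - F 0) / complex_of_real h * inverse (T h + T 0)) \<longlongrightarrow> F' * inverse (2 * T 0)) (at 0)"
    using F Q by (intro tendsto_mult)
  have "((\<lambda>h. (T (0 + h) - T 0) / complex_of_real h) \<longlongrightarrow> F' * inverse (2 * T 0)) (at 0)"
    by (rule Lim_transform_eventually[OF LL EV])
  then show ?thesis using vd_iff[of T _ 0] by simp
qed

lemma vd_inverse: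
  fixes f :: "real \<Rightarrow> complex"
  assumes "(f has_vector_derivative D) (at t)" "f t \<noteq> 0"
  shows "((\<lambda>t. inverse (f t)) has_vector_derivative - (inverse (f t) * D * inverse (f t))) (at t)"
proof -
  have "((\<lambda>t. inverse (f t)) has_derivative (\<lambda>h. - (inverse (f t) * (h *\<^sub>R D) * inverse (f t)))) (at t)"
    using assms unfolding has_vector_derivative_def by (intro Deriv.has_derivative_inverse) auto
  moreover have "(\<lambda>h. - (inverse (f t) * (h *\<^sub>R D) * inverse (f t))) = (\<lambda>h. h *\<^sub>R (- (inverse (f t) * D * inverse (f t))))"
    by (auto simp: scaleR_conv_of_real mult_ac)
  ultimately show ?thesis unfolding has_vector_derivative_def by metis
qed

inductive_set cC :: "'a::euclidean_space set \<Rightarrow> ('a \<Rightarrow> complex) set" for U where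
  cconst: "(\<lambda>x. k) \<in> cC U"
| clin: "(\<lambda>x. complex_of_real (x \<bullet> v)) \<in> cC U"
| cadd: "f \<in> cC U \<Longrightarrow> g \<in> cC U \<Longrightarrow> (\<lambda>x. f x + g x) \<in> cC U"
| cmul: "f \<in> cC U \<Longrightarrow> g \<in> cC U \<Longrightarrow> (\<lambda>x. f x * g x) \<in> cC U"
| ccnj: "f \<in> cC U \<Longrightarrow> (\<lambda>x. cnj (f x)) \<in> cC U"
| cinv: "f \<in> cC U \<Longrightarrow> (\<forall>x\<in>U. f x \<noteq> 0) \<Longrightarrow> (\<lambda>x. inverse (f x)) \<in> cC U"
| csq: "f \<in> cC U \<Longrightarrow> (\<forall>x\<in>U. S x \<noteq> 0 \<and> S x ^ 2 = f x \<and> isCont S x) \<Longrightarrow> S \<in> cC U"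

lemma cC_neg: "f \<in> cC U \<Longrightarrow> (\<lambda>x. - f x) \<in> cC U"
  using cC.cmul[OF cC.cconst[of "-1"]] by simp

lemma cC_diff: "f \<in> cC U \<Longrightarrow> g \<in> cC U \<Longrightarrow> (\<lambda>x. f x - g x) \<in> cC U"
  using cC.cadd[OF _ cC_neg] by simp

lemma cC_div: "f \<in> cC U \<Longrightarrow> g \<in> cC U \<Longrightarrow> \<forall>x\<in>U. g x \<noteq> 0 \<Longrightarrow> (\<lambda>x. f x / g x) \<in> cC U"
  using cC.cmul[OF _ cC.cinv] by (simp add: divide_inverse)

lemma line_ev:
  fixes x b :: "'a::real_normed_vector"
  assumes "open U" "x \<in> U"
  shows "eventually (\<lambda>t. x + t *\<^sub>R b \<in> U) (nhds 0)"
proof -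
  have "isCont (\<lambda>t. x + t *\<^sub>R b) 0" by (intro continuous_intros)
  then have "((\<lambda>t. x + t *\<^sub>R b) \<longlongrightarrow> x) (nhds 0)"
    using tendsto_at_iff_tendsto_nhds[of "\<lambda>t. x + t *\<^sub>R b" 0] unfolding isCont_def by simp
  then show ?thesis using assms topological_tendstoD by fastforce
qed

lemma cC_key:
  assumes U: "open U" and f: "f \<in> cC U"
  shows "(\<forall>x\<in>U. isCont f x) \<and> (\<forall>b. \<exists>h\<in>cC U. \<forall>x\<in>U. ((\<lambda>t. f (x + t *\<^sub>R b)) has_vector_derivative h x) (at 0))"
  using f
proof (induction rule: cC.induct)
  case (cconst k)
  show ?case by (intro conjI allI ballI bexI[of _ "\<lambda>x. 0"] cC.cconst) auto
next
  case (clin v)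
  have "\<exists>h\<in>cC U. \<forall>x\<in>U. ((\<lambda>t. complex_of_real ((x + t *\<^sub>R b) \<bullet> v)) has_vector_derivative h x) (at 0)" for b
  proof (intro bexI[of _ "\<lambda>x. complex_of_real (b \<bullet> v)"] ballI)
    fix x
    have "((\<lambda>t. (x + t *\<^sub>R b) \<bullet> v) has_field_derivative (b \<bullet> v)) (at 0)"
      unfolding inner_add_left inner_scaleR_left by (auto intro!: derivative_eq_intros)
    then show "((\<lambda>t. complex_of_real ((x + t *\<^sub>R b) \<bullet> v)) has_vector_derivative complex_of_real (b \<bullet> v)) (at 0)"
      by (rule has_vector_derivative_of_real)
  qed (rule cC.cconst)
  moreover have "\<forall>x\<in>U. isCont (\<lambda>x. complex_of_real (x \<bullet> v)) x" by (intro ballI continuous_intros)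
  ultimately show ?case by blast
next
  case (cadd f g)
  have cf: "\<forall>x\<in>U. isCont f x" using cadd.IH(1) by (rule conjunct1)
  have df: "\<forall>b. \<exists>h\<in>cC U. \<forall>x\<in>U. ((\<lambda>t. f (x + t *\<^sub>R b)) has_vector_derivative h x) (at 0)" using cadd.IH(1) by (rule conjunct2)
  have cg: "\<forall>x\<in>U. isCont g x" using cadd.IH(2) by (rule conjunct1)
  have dg: "\<forall>b. \<exists>h\<in>cC U. \<forall>x\<in>U. ((\<lambda>t. g (x + t *\<^sub>R b)) has_vector_derivative h x) (at 0)" using cadd.IH(2) by (rule conjunct2)
  show ?case
  proof (intro conjI allI ballI)
    fix x assume "x \<in> U"
    then show "isCont (\<lambda>x. f x + g x) x" using cf cg by (intro isCont_add) auto
  next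
    fix b
    obtain h1 where h1: "h1 \<in> cC U" "\<forall>x\<in>U. ((\<lambda>t. f (x + t *\<^sub>R b)) has_vector_derivative h1 x) (at 0)" using df by blast
    obtain h2 where h2: "h2 \<in> cC U" "\<forall>x\<in>U. ((\<lambda>t. g (x + t *\<^sub>R b)) has_vector_derivative h2 x) (at 0)" using dg by blast
    have "\<forall>x\<in>U. ((\<lambda>t. f (x + t *\<^sub>R b) + g (x + t *\<^sub>R b)) has_vector_derivative h1 x + h2 x) (at 0)"
      using h1(2) h2(2) by (intro ballI has_vector_derivative_add) auto
    then show "\<exists>h\<in>cC U. \<forall>x\<in>U. ((\<lambda>t. f (x + t *\<^sub>R b) + g (x + t *\<^sub>R b)) has_vector_derivative h x) (at 0)"
      using cC.cadd[OF h1(1) h2(1)] by (rule bexI)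
  qed
next
  case (cmul f g)
  have cf: "\<forall>x\<in>U. isCont f x" using cmul.IH(1) by (rule conjunct1)
  have df: "\<forall>b. \<exists>h\<in>cC U. \<forall>x\<in>U. ((\<lambda>t. f (x + t *\<^sub>R b)) has_vector_derivative h x) (at 0)" using cmul.IH(1) by (rule conjunct2)
  have cg: "\<forall>x\<in>U. isCont g x" using cmul.IH(2) by (rule conjunct1)
  have dg: "\<forall>b. \<exists>h\<in>cC U. \<forall>x\<in>U. ((\<lambda>t. g (x + t *\<^sub>R b)) has_vector_derivative h x) (at 0)" using cmul.IH(2) by (rule conjunct2)
  show ?case
  proof (intro conjI allI ballI)
    fix x assume "x \<in> U"
    then show "isCont (\<lambda>x. f x * g x) x" using cf cg by (intro isCont_mult) auto
  next
    fix b
    obtain h1 where h1: "h1 \<in> cC U" "\<forall>x\<in>U. ((\<lambda>t. f (x + t *\<^sub>R b)) has_vector_derivative h1 x) (at 0)" using df by blast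
    obtain h2 where h2: "h2 \<in> cC U" "\<forall>x\<in>U. ((\<lambda>t. g (x + t *\<^sub>R b)) has_vector_derivative h2 x) (at 0)" using dg by blast
    have "\<forall>x\<in>U. ((\<lambda>t. f (x + t *\<^sub>R b) * g (x + t *\<^sub>R b)) has_vector_derivative f x * h2 x + h1 x * g x) (at 0)" (is "\<forall>x\<in>U. ?P x")
    proof (rule ballI)
      fix x assume xU: "x \<in> U"
      have e: "x + 0 *\<^sub>R b = x" by simp
      from has_vector_derivative_mult[OF h1(2)[rule_format, OF xU] h2(2)[rule_format, OF xU]]
      show "?P x" unfolding e .
    qed
    moreover have "(\<lambda>x. f x * h2 x + h1 x * g x) \<in> cC U"
      by (rule cC.cadd[OF cC.cmul[OF cmul.hyps(1) h2(1)] cC.cmul[OF h1(1) cmul.hyps(2)]])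
    ultimately show "\<exists>h\<in>cC U. \<forall>x\<in>U. ((\<lambda>t. f (x + t *\<^sub>R b) * g (x + t *\<^sub>R b)) has_vector_derivative h x) (at 0)"
      by (rule bexI)
  qed
next
  case (ccnj f)
  have cf: "\<forall>x\<in>U. isCont f x" using ccnj.IH by (rule conjunct1)
  have df: "\<forall>b. \<exists>h\<in>cC U. \<forall>x\<in>U. ((\<lambda>t. f (x + t *\<^sub>R b)) has_vector_derivative h x) (at 0)" using ccnj.IH by (rule conjunct2)
  show ?case
  proof (intro conjI allI ballI)
    fix x assume "x \<in> U"
    then show "isCont (\<lambda>x. cnj (f x)) x" using cf by (intro continuous_intros) auto
  next
    fix b
    obtain h1 where h1: "h1 \<in> cC U" "\<forall>x\<in>U. ((\<lambda>t. f (x + t *\<^sub>R b)) has_vector_derivative h1 x) (at 0)" using df by blast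
    have "\<forall>x\<in>U. ((\<lambda>t. cnj (f (x + t *\<^sub>R b))) has_vector_derivative cnj (h1 x)) (at 0)"
      using h1(2) by (intro ballI has_vector_derivative_cnj) auto
    then show "\<exists>h\<in>cC U. \<forall>x\<in>U. ((\<lambda>t. cnj (f (x + t *\<^sub>R b))) has_vector_derivative h x) (at 0)"
      using cC.ccnj[OF h1(1)] by (rule bexI)
  qed
next
  case (cinv f)
  have cf: "\<forall>x\<in>U. isCont f x" using cinv.IH by (rule conjunct1)
  have df: "\<forall>b. \<exists>h\<in>cC U. \<forall>x\<in>U. ((\<lambda>t. f (x + t *\<^sub>R b)) has_vector_derivative h x) (at 0)" using cinv.IH by (rule conjunct2)
  have nzf: "\<forall>x\<in>U. f x \<noteq> 0" by (rule cinv.hyps(2))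
  show ?case
  proof (intro conjI allI ballI)
    fix x assume x: "x \<in> U"
    show "isCont (\<lambda>x. inverse (f x)) x" using cf nzf x by (auto intro!: continuous_intros)
  next
    fix b
    obtain h1 where h1: "h1 \<in> cC U" "\<forall>x\<in>U. ((\<lambda>t. f (x + t *\<^sub>R b)) has_vector_derivative h1 x) (at 0)" using df by blast
    have "\<forall>x\<in>U. ((\<lambda>t. inverse (f (x + t *\<^sub>R b))) has_vector_derivative - (inverse (f x) * h1 x * inverse (f x))) (at 0)" (is "\<forall>x\<in>U. ?P x")
    proof (rule ballI)
      fix x assume xU: "x \<in> U"
      have e: "x + 0 *\<^sub>R b = x" by simp
      have nz': "f (x + 0 *\<^sub>R b) \<noteq> 0" unfolding e using nzf xU by blast
      from vd_inverse[OF h1(2)[rule_format, OF xU] nz'] show "?P x" unfolding e .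
    qed
    moreover have "(\<lambda>x. - (inverse (f x) * h1 x * inverse (f x))) \<in> cC U"
    proof -
      have i: "(\<lambda>x. inverse (f x)) \<in> cC U" by (rule cC.cinv[OF cinv.hyps(1) nzf])
      show ?thesis by (rule cC_neg[OF cC.cmul[OF cC.cmul[OF i h1(1)] i]])
    qed
    ultimately show "\<exists>h\<in>cC U. \<forall>x\<in>U. ((\<lambda>t. inverse (f (x + t *\<^sub>R b))) has_vector_derivative h x) (at 0)"
      by (rule bexI)
  qed
next
  case (csq f S)
  have df: "\<forall>b. \<exists>h\<in>cC U. \<forall>x\<in>U. ((\<lambda>t. f (x + t *\<^sub>R b)) has_vector_derivative h x) (at 0)" using csq.IH by (rule conjunct2)
  have SP: "\<forall>x\<in>U. S x \<noteq> 0 \<and> S x ^ 2 = f x \<and> isCont S x" by (rule csq.hyps(2))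
  show ?case
  proof (intro conjI allI ballI)
    fix x assume "x \<in> U" then show "isCont S x" using SP by blast
  next
    fix b
    obtain h1 where h1: "h1 \<in> cC U" "\<forall>x\<in>U. ((\<lambda>t. f (x + t *\<^sub>R b)) has_vector_derivative h1 x) (at 0)" using df by blast
    have "\<forall>x\<in>U. ((\<lambda>t. S (x + t *\<^sub>R b)) has_vector_derivative h1 x * inverse (2 * S x)) (at 0)" (is "\<forall>x\<in>U. ?P x")
    proof (rule ballI)
      fix x assume xU: "x \<in> U"
      have e: "x + 0 *\<^sub>R b = x" by simp
      have c1: "isCont (\<lambda>t. S (x + t *\<^sub>R b)) 0"
      proof (rule isCont_o2[where f="\<lambda>t. x + t *\<^sub>R b" and g=S])
        show "isCont (\<lambda>t. x + t *\<^sub>R b) 0" by (intro continuous_intros)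
        show "isCont S (x + 0 *\<^sub>R b)" unfolding e using SP xU by blast
      qed
      have c3: "eventually (\<lambda>t. S (x + t *\<^sub>R b) ^ 2 = f (x + t *\<^sub>R b)) (nhds 0)"
        using line_ev[OF U xU, of b] SP by (auto elim: eventually_mono)
      have c2: "S (x + 0 *\<^sub>R b) \<noteq> 0" unfolding e using SP xU by blast
      have c4: "((\<lambda>t. f (x + t *\<^sub>R b)) has_vector_derivative h1 x) (at 0)" using h1(2) xU by blast
      have "((\<lambda>t. S (x + t *\<^sub>R b)) has_vector_derivative h1 x * inverse (2 * S (x + 0 *\<^sub>R b))) (at 0)"
        using vd_sqrt[OF c1 c2 c3 c4] by simp
      then show "?P x" unfolding e .
    qed
    moreover have "(\<lambda>x. h1 x * inverse (2 * S x)) \<in> cC U"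
    proof -
      have S: "S \<in> cC U" by (rule cC.csq[OF csq.hyps(1) SP])
      have nz2: "\<forall>x\<in>U. 2 * S x \<noteq> 0" using SP by simp
      show ?thesis by (rule cC.cmul[OF h1(1) cC.cinv[OF cC.cmul[OF cC.cconst S] nz2]])
    qed
    ultimately show "\<exists>h\<in>cC U. \<forall>x\<in>U. ((\<lambda>t. S (x + t *\<^sub>R b)) has_vector_derivative h x) (at 0)"
      by (rule bexI)
  qed
qed

lemma cC_step:
  assumes U: "open U" and gf: "\<exists>f\<in>cC U. g = (\<lambda>x. Re (f x))"
  shows "continuous_on U g \<and> (\<forall>b. \<exists>h. (\<forall>x\<in>U. ((\<lambda>t. g (x + t *\<^sub>R b)) has_real_derivative h x) (at 0)) \<and>
        (\<exists>f\<in>cC U. h = (\<lambda>x. Re (f x))))"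
proof -
  obtain f where f: "f \<in> cC U" and g: "g = (\<lambda>x. Re (f x))" using gf by blast
  have K: "(\<forall>x\<in>U. isCont f x) \<and> (\<forall>b. \<exists>h\<in>cC U. \<forall>x\<in>U. ((\<lambda>t. f (x + t *\<^sub>R b)) has_vector_derivative h x) (at 0))"
    by (rule cC_key[OF U f])
  have "continuous_on U g" unfolding g using K
    by (intro continuous_at_imp_continuous_on ballI continuous_intros) auto
  moreover have "\<exists>h. (\<forall>x\<in>U. ((\<lambda>t. g (x + t *\<^sub>R b)) has_real_derivative h x) (at 0)) \<and>
      (\<exists>f\<in>cC U. h = (\<lambda>x. Re (f x)))" for b
  proof -
    obtain h where h: "h \<in> cC U" "\<forall>x\<in>U. ((\<lambda>t. f (x + t *\<^sub>R b)) has_vector_derivative h x) (at 0)"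
      using K by blast
    have "\<forall>x\<in>U. ((\<lambda>t. g (x + t *\<^sub>R b)) has_real_derivative Re (h x)) (at 0)"
      unfolding g using h(2) by (auto intro: has_field_derivative_Re)
    then show ?thesis using h(1) by (intro exI[of _ "\<lambda>x. Re (h x)"] conjI bexI[of _ h]) auto
  qed
  ultimately show ?thesis by blast
qed

lemma cC_smooth:
  assumes U: "open U" and f: "f \<in> cC U"
  shows "smooth_fun U (\<lambda>x. Re (f x))"
  apply (rule smooth_fun.coinduct[where X="\<lambda>g. \<exists>f\<in>cC U. g = (\<lambda>x. Re (f x))"])
  using f apply blast
  subgoal for g
  proof -
    assume a: "\<exists>f\<in>cC U. g = (\<lambda>x. Re (f x))"
    note S = cC_step[OF U a]
    have C: "continuous_on U g" using S by (rule conjunct1)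
    have D: "\<forall>b. \<exists>h. (\<forall>x\<in>U. ((\<lambda>t. g (x + t *\<^sub>R b)) has_real_derivative h x) (at 0)) \<and>
        (\<exists>f\<in>cC U. h = (\<lambda>x. Re (f x)))" using S by (rule conjunct2)
    show ?thesis
    proof (rule exI[of _ g], intro conjI refl C ballI)
      fix b :: 'a
      obtain h where h1: "\<forall>x\<in>U. ((\<lambda>t. g (x + t *\<^sub>R b)) has_real_derivative h x) (at 0)"
        and h2: "\<exists>f\<in>cC U. h = (\<lambda>x. Re (f x))" using D[rule_format, of b] by (elim exE conjE)
      show "\<exists>h. (\<forall>x\<in>U. ((\<lambda>t. g (x + t *\<^sub>R b)) has_real_derivative h x) (at 0)) \<and>
        ((\<exists>f\<in>cC U. h = (\<lambda>x. Re (f x))) \<or> smooth_fun U h)"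
        by (intro exI[of _ h] conjI disjI1 h1 h2)
    qed
  qed
  done

lemma cC_smooth_Im:
  assumes U: "open U" and f: "f \<in> cC U"
  shows "smooth_fun U (\<lambda>x. Im (f x))"
proof -
  have "(\<lambda>x. - \<i> * f x) \<in> cC U" by (rule cC.cmul[OF cC.cconst f])
  from cC_smooth[OF U this] show ?thesis by simp
qed

lemma smooth_on_pair:
  fixes g :: "'a::euclidean_space \<Rightarrow> complex \<times> complex"
  assumes U: "open U" and g1: "(\<lambda>x. fst (g x)) \<in> cC U" and g2: "(\<lambda>x. snd (g x)) \<in> cC U"
  shows "smooth_on U g"
  unfolding smooth_on_def
proof (intro conjI U ballI)
  fix b :: "complex \<times> complex" assume "b \<in> Basis"
  then have "b = (1,0) \<or> b = (\<i>,0) \<or> b = (0,1) \<or> b = (0,\<i>)"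
    unfolding Basis_prod_def Basis_complex_def by auto
  moreover have "(\<lambda>x. g x \<bullet> (1,0)) = (\<lambda>x. Re (fst (g x)))" by (simp add: inner_prod_def)
  moreover have "(\<lambda>x. g x \<bullet> (\<i>,0)) = (\<lambda>x. Im (fst (g x)))" by (simp add: inner_prod_def)
  moreover have "(\<lambda>x. g x \<bullet> (0,1)) = (\<lambda>x. Re (snd (g x)))" by (simp add: inner_prod_def)
  moreover have "(\<lambda>x. g x \<bullet> (0,\<i>)) = (\<lambda>x. Im (snd (g x)))" by (simp add: inner_prod_def)
  ultimately show "smooth_fun U (\<lambda>x. g x \<bullet> b)"
    using cC_smooth[OF U g1] cC_smooth_Im[OF U g1] cC_smooth[OF U g2] cC_smooth_Im[OF U g2]
    by metis
qed

definition mob :: "complex \<times> complex \<Rightarrow> complex \<Rightarrow> complex" where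
  "mob p z = fst p * (z - snd p) / (1 - cnj (snd p) * z)"

definition pD :: "complex \<times> complex \<Rightarrow> complex \<times> complex \<Rightarrow> complex" where
  "pD p q = 1 + cnj (fst q) * snd p * cnj (snd q)"

definition pmul :: "complex \<times> complex \<Rightarrow> complex \<times> complex \<Rightarrow> complex \<times> complex" where
  "pmul p q = (fst p * fst q * pD p q / cnj (pD p q), (snd q + cnj (fst q) * snd p) / pD p q)"

definition pinv :: "complex \<times> complex \<Rightarrow> complex \<times> complex" where
  "pinv p = (cnj (fst p), - fst p * snd p)"

lemma AutP_iff: "p \<in> AutP \<longleftrightarrow> cmod (fst p) = 1 \<and> cmod (snd p) < 1"
  by (cases p) (simp add: AutP_def disc_def)

lemma unit_cnj: "cmod u = 1 \<Longrightarrow> u * cnj u = 1"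
proof -
  assume "cmod u = 1"
  then have "complex_of_real ((cmod u)^2) = 1" by simp
  then show ?thesis using complex_norm_square[of u] by simp
qed

lemma norm_ident: "(cmod (1 - cnj a * z))^2 - (cmod (z - a))^2 = (1 - (cmod a)^2) * (1 - (cmod z)^2)"
  unfolding cmod_power2 by (simp add: power2_eq_square algebra_simps)

lemma prod_lt1: "cmod a < 1 \<Longrightarrow> cmod z < 1 \<Longrightarrow> cmod a * cmod z < 1"
  using mult_strict_mono[of "cmod a" 1 "cmod z" 1] by simp

lemma den_nz: "cmod a < 1 \<Longrightarrow> cmod z < 1 \<Longrightarrow> 1 - cnj a * z \<noteq> 0"
proof
  assume "cmod a < 1" "cmod z < 1" "1 - cnj a * z = 0"
  then have "cmod (cnj a * z) = 1" by (metis eq_iff_diff_eq_0 norm_one)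
  moreover have "cmod (cnj a * z) < 1" using prod_lt1[OF \<open>cmod a < 1\<close> \<open>cmod z < 1\<close>] by (simp add: norm_mult)
  ultimately show False by simp
qed

lemma mob_lt1:
  assumes "cmod a < 1" "cmod z < 1"
  shows "cmod (z - a) < cmod (1 - cnj a * z)"
proof -
  have "(1 - (cmod a)^2) * (1 - (cmod z)^2) > 0"
    using prod_lt1[OF assms(1) assms(1)] prod_lt1[OF assms(2) assms(2)]
    by (intro mult_pos_pos) (simp_all add: power2_eq_square)
  then have "(cmod (z - a))^2 < (cmod (1 - cnj a * z))^2" using norm_ident[of a z] by linarith
  then show ?thesis by (rule power_less_imp_less_base) simp
qed

lemma mob_disc:
  assumes "p \<in> AutP" "cmod z < 1"
  shows "cmod (mob p z) < 1"
proof -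
  have a: "cmod (snd p) < 1" "cmod (fst p) = 1" using assms(1) by (auto simp: AutP_iff)
  have "cmod (mob p z) = cmod (z - snd p) / cmod (1 - cnj (snd p) * z)"
    unfolding mob_def using a by (simp add: norm_mult norm_divide)
  also have "\<dots> < 1" using mob_lt1[OF a(1) assms(2)] den_nz[OF a(1) assms(2)] by simp
  finally show ?thesis .
qed

lemma pD_nz:
  assumes "p \<in> AutP" "q \<in> AutP"
  shows "pD p q \<noteq> 0"
proof -
  have a: "cmod (snd p) < 1" "cmod (fst q) = 1" "cmod (snd q) < 1" using assms by (auto simp: AutP_iff)
  have "cmod (cnj (fst q) * snd p * cnj (snd q)) < 1"
    using prod_lt1[OF a(1) a(3)] a(2) by (simp add: norm_mult)
  then have "cnj (fst q) * snd p * cnj (snd q) \<noteq> -1" by auto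
  then show ?thesis unfolding pD_def by (metis add_eq_0_iff)
qed

lemma cnj_pD: "cnj (pD p q) = 1 + fst q * cnj (snd p) * snd q"
  unfolding pD_def by simp

lemma mob_pmul:
  assumes P: "p \<in> AutP" and Q: "q \<in> AutP" and z: "cmod z < 1"
  shows "mob p (mob q z) = mob (pmul p q) z"
proof -
  obtain u a where p: "p = (u, a)" by (cases p)
  obtain v b where q: "q = (v, b)" by (cases q)
  have ua: "cmod u = 1" "cmod a < 1" using P p by (auto simp: AutP_iff)
  have vb: "cmod v = 1" "cmod b < 1" using Q q by (auto simp: AutP_iff)
  have vv: "v * cnj v = 1" by (rule unit_cnj[OF vb(1)])
  define m where "m = mob q z"
  define d1 where "d1 = 1 - cnj b * z"
  have d1: "d1 \<noteq> 0" unfolding d1_def by (rule den_nz[OF vb(2) z])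
  have m: "cmod m < 1" unfolding m_def by (rule mob_disc[OF Q z])
  have d2: "1 - cnj a * m \<noteq> 0" by (rule den_nz[OF ua(2) m])
  define N where "N = (v + a * cnj b) * z - (v * b + a)"
  define M where "M = (1 + cnj a * v * b) - (cnj b + cnj a * v) * z"
  have mq: "m = v * (z - b) / d1" unfolding m_def mob_def q d1_def by simp
  have h1: "m - a = N / d1" unfolding mq N_def using d1 by (simp add: field_simps d1_def; simp add: algebra_simps)
  have h2: "1 - cnj a * m = M / d1" unfolding mq M_def using d1 by (simp add: field_simps d1_def; simp add: algebra_simps)
  have Mnz: "M \<noteq> 0" using h2 d2 by auto
  have L: "mob p m = u * N / M" unfolding mob_def p using h1 h2 d1 Mnz by simp
  define D where "D = pD p q"
  have D: "D \<noteq> 0" unfolding D_def by (rule pD_nz[OF P Q])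
  have Dc: "cnj D \<noteq> 0" using D by simp
  have Dd: "D = 1 + cnj v * a * cnj b" unfolding D_def pD_def p q by simp
  have Dcd: "cnj D = 1 + v * cnj a * b" unfolding Dd by simp
  have pm: "pmul p q = (u * v * D / cnj D, (b + cnj v * a) / D)" unfolding pmul_def D_def p q by simp
  have e1: "z - (b + cnj v * a) / D = (D * z - (b + cnj v * a)) / D" using D by (simp add: field_simps)
  have e2: "1 - cnj ((b + cnj v * a) / D) * z = M / cnj D"
    unfolding M_def using Dc by (simp add: field_simps Dcd; simp add: algebra_simps)
  have e3: "v * (D * z - (b + cnj v * a)) = N"
    unfolding N_def Dd by (simp add: algebra_simps) (metis (no_types, lifting) vv mult.assoc mult.commute mult.left_commute mult_1)
  have "mob (pmul p q) z = u * v * D / cnj D * ((D * z - (b + cnj v * a)) / D) / (M / cnj D)"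
    unfolding pm mob_def using e1 e2 by simp
  also have "\<dots> = u * (v * (D * z - (b + cnj v * a))) / M" using D Dc Mnz by (simp add: field_simps)
  also have "\<dots> = u * N / M" using e3 by simp
  finally show ?thesis using L unfolding m_def by simp
qed

lemma pmul_AutP:
  assumes P: "p \<in> AutP" and Q: "q \<in> AutP"
  shows "pmul p q \<in> AutP"
proof -
  obtain u a where p: "p = (u, a)" by (cases p)
  obtain v b where q: "q = (v, b)" by (cases q)
  have ua: "cmod u = 1" "cmod a < 1" using P p by (auto simp: AutP_iff)
  have vb: "cmod v = 1" "cmod b < 1" using Q q by (auto simp: AutP_iff)
  define D where "D = pD p q"
  have D: "D \<noteq> 0" unfolding D_def by (rule pD_nz[OF P Q])
  have Dcd: "cnj D = 1 + v * cnj a * b" unfolding D_def pD_def p q by simp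
  have pm: "pmul p q = (u * v * D / cnj D, (b + cnj v * a) / D)" unfolding pmul_def D_def p q by simp
  define al where "al = - cnj v * a"
  have al: "cmod al < 1" unfolding al_def using ua vb by (simp add: norm_mult)
  have "cmod (b - al) < cmod (1 - cnj al * b)" by (rule mob_lt1[OF al vb(2)])
  moreover have "b - al = b + cnj v * a" unfolding al_def by simp
  moreover have "1 - cnj al * b = cnj D" unfolding al_def Dcd by simp
  ultimately have "cmod (b + cnj v * a) < cmod D" by simp
  then have "cmod ((b + cnj v * a) / D) < 1" using D by (simp add: norm_divide divide_less_eq_1)
  moreover have "cmod (u * v * D / cnj D) = 1" using ua vb D by (simp add: norm_mult norm_divide)
  ultimately show ?thesis unfolding pm AutP_iff by simp
qed

lemma mob_unique:
  assumes P: "p \<in> AutP" and Q: "q \<in> AutP" and E: "\<And>z. cmod z < 1 \<Longrightarrow> mob p z = mob q z"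
  shows "p = q"
proof -
  obtain u a where p: "p = (u, a)" by (cases p)
  obtain v b where q: "q = (v, b)" by (cases q)
  have ua: "cmod u = 1" "cmod a < 1" using P p by (auto simp: AutP_iff)
  have vb: "cmod v = 1" "cmod b < 1" using Q q by (auto simp: AutP_iff)
  have "mob p a = mob q a" using E ua by simp
  then have "v * (a - b) / (1 - cnj b * a) = 0" unfolding mob_def p q by simp
  then have ab: "a = b" using den_nz[OF vb(2) ua(2)] vb(1) by auto
  define z :: complex where "z = (if a = 0 then 1/2 else 0)"
  have z: "cmod z < 1" "z - a \<noteq> 0" unfolding z_def by auto
  have "mob p z = mob q z" using E z by simp
  then have "u * (z - a) / (1 - cnj a * z) = v * (z - a) / (1 - cnj a * z)" unfolding mob_def p q ab by simp
  then have "u * (z - a) = v * (z - a)" using den_nz[OF ua(2) z(1)] by (simp only: divide_cancel_right) simp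
  then have "u = v" using z(2) by (simp only: mult_cancel_right) simp
  then show ?thesis using p q ab by simp
qed

lemma pmul_assoc:
  assumes "p \<in> AutP" "q \<in> AutP" "r \<in> AutP"
  shows "pmul (pmul p q) r = pmul p (pmul q r)"
proof (rule mob_unique)
  show "pmul (pmul p q) r \<in> AutP" "pmul p (pmul q r) \<in> AutP" using assms by (simp_all add: pmul_AutP)
  fix z :: complex assume z: "cmod z < 1"
  have "mob (pmul (pmul p q) r) z = mob (pmul p q) (mob r z)"
    using mob_pmul[OF pmul_AutP[OF assms(1,2)] assms(3) z] by simp
  also have "\<dots> = mob p (mob q (mob r z))" using mob_pmul[OF assms(1,2) mob_disc[OF assms(3) z]] by simp
  also have "\<dots> = mob p (mob (pmul q r) z)" using mob_pmul[OF assms(2,3) z] by simp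
  also have "\<dots> = mob (pmul p (pmul q r)) z" using mob_pmul[OF assms(1) pmul_AutP[OF assms(2,3)] z] by simp
  finally show "mob (pmul (pmul p q) r) z = mob (pmul p (pmul q r)) z" .
qed

lemma pmul_id_right [simp]: "pmul p (1, 0) = p"
  unfolding pmul_def pD_def by (cases p) simp

lemma pmul_id_left [simp]: "pmul (1, 0) p = p"
  unfolding pmul_def pD_def by (cases p) simp

lemma pinv_AutP: "p \<in> AutP \<Longrightarrow> pinv p \<in> AutP"
  unfolding pinv_def AutP_iff by (simp add: norm_mult)

lemma pmul_pinv_right:
  assumes P: "p \<in> AutP" shows "pmul p (pinv p) = (1, 0)"
proof -
  obtain u a where p: "p = (u, a)" by (cases p)
  have ua: "cmod u = 1" using P p by (auto simp: AutP_iff)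
  have uu: "u * cnj u = 1" by (rule unit_cnj[OF ua])
  have D: "pD p (pinv p) \<noteq> 0" by (rule pD_nz[OF P pinv_AutP[OF P]])
  have Dc: "cnj (pD p (pinv p)) = pD p (pinv p)" unfolding pD_def pinv_def p by (simp add: mult_ac)
  show ?thesis unfolding pmul_def Dc using D uu unfolding pinv_def p by simp
qed

lemma pmul_pinv_left:
  assumes P: "p \<in> AutP" shows "pmul (pinv p) p = (1, 0)"
proof -
  obtain u a where p: "p = (u, a)" by (cases p)
  have ua: "cmod u = 1" using P p by (auto simp: AutP_iff)
  have uu: "cnj u * u = 1" using unit_cnj[OF ua] by (simp add: mult.commute)
  have D: "pD (pinv p) p \<noteq> 0" by (rule pD_nz[OF pinv_AutP[OF P] P])
  have Dc: "cnj (pD (pinv p) p) = pD (pinv p) p" unfolding pD_def pinv_def p by (simp add: mult_ac)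
  have "snd (pmul (pinv p) p) = 0" unfolding pmul_def pinv_def p by (simp add: mult.assoc[symmetric] uu)
  moreover have "fst (pmul (pinv p) p) = 1" unfolding pmul_def Dc using D uu unfolding pinv_def p by simp
  ultimately show ?thesis by (metis prod.collapse)
qed

lemma in_disc: "z \<in> disc \<longleftrightarrow> cmod z < 1"
  by (simp add: disc_def)

lemma autf_mob: "autf p = restrict (mob p) disc"
  unfolding autf_def mob_def by simp

lemma THE_AutP:
  assumes r: "r \<in> AutP" and F: "\<And>z. cmod z < 1 \<Longrightarrow> F z = mob r z"
  shows "(THE q. q \<in> AutP \<and> autf q = restrict F disc) = r"
proof (rule the_equality)
  have "restrict (mob r) disc = restrict F disc" by (rule restrict_ext) (simp add: F in_disc)
  then show "r \<in> AutP \<and> autf r = restrict F disc" using r by (simp add: autf_mob)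
next
  fix q assume q: "q \<in> AutP \<and> autf q = restrict F disc"
  show "q = r"
  proof (rule mob_unique)
    show "q \<in> AutP" "r \<in> AutP" using q r by auto
    fix z :: complex assume z: "cmod z < 1"
    have "autf q z = restrict F disc z" using q by simp
    then show "mob q z = mob r z" using z F[OF z] by (simp add: autf_mob in_disc)
  qed
qed

lemma m10_AutP: "(-1, 0) \<in> AutP" by (simp add: AutP_iff)

lemma act_0_eq:
  assumes P: "p \<in> AutP" shows "act_0 p = pmul p (-1, 0)"
  unfolding act_0_def
proof (rule THE_AutP)
  show "pmul p (-1, 0) \<in> AutP" by (rule pmul_AutP[OF P m10_AutP])
  fix z :: complex assume z: "cmod z < 1"
  have "mob (pmul p (-1, 0)) z = mob p (mob (-1, 0) z)" using mob_pmul[OF P m10_AutP z] by simp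
  also have "mob (-1, 0) z = - z" by (simp add: mob_def)
  finally show "autf p (- z) = mob (pmul p (-1, 0)) z" using z by (simp add: autf_mob in_disc)
qed

lemma mc_AutP: "0 < c \<Longrightarrow> c < 1 \<Longrightarrow> (-1, complex_of_real c) \<in> AutP" by (simp add: AutP_iff)

lemma act_c_eq:
  assumes c: "0 < c" "c < 1" and P: "p \<in> AutP" shows "act_c c p = pmul p (-1, complex_of_real c)"
  unfolding act_c_def
proof (rule THE_AutP)
  show "pmul p (-1, complex_of_real c) \<in> AutP" by (rule pmul_AutP[OF P mc_AutP[OF c]])
  fix z :: complex assume z: "cmod z < 1"
  have "mob (pmul p (-1, complex_of_real c)) z = mob p (mob (-1, complex_of_real c) z)" using mob_pmul[OF P mc_AutP[OF c] z] by simp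
  also have "mob (-1, complex_of_real c) z = phic c z" by (simp add: mob_def phic_def)
  finally have e: "mob (pmul p (-1, complex_of_real c)) z = mob p (phic c z)" .
  have "cmod (mob (-1, complex_of_real c) z) < 1" by (rule mob_disc[OF mc_AutP[OF c] z])
  then have "cmod (phic c z) < 1" by (simp add: mob_def phic_def)
  then show "(autf p \<circ> phic c) z = mob (pmul p (-1, complex_of_real c)) z" using e by (simp add: autf_mob in_disc)
qed

definition tc :: "real \<Rightarrow> real" where "tc c = (1 - sqrt (1 - c^2)) / c"

lemma tc_props:
  assumes c: "0 < c" "c < 1"
  shows "0 < tc c \<and> tc c < 1 \<and> c * (1 + (tc c)^2) = 2 * tc c"
proof -
  define s where "s = sqrt (1 - c^2)"
  have "c * c < 1 * 1" using mult_strict_mono[of c 1 c 1] c by simp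
  then have c2: "c^2 < 1" by (simp add: power2_eq_square)
  have s0: "0 < s" unfolding s_def using c2 by simp
  have ss: "s^2 = 1 - c^2" unfolding s_def using c2 by simp
  have "s^2 < 1^2" using ss c by simp
  then have s1: "s < 1" by (rule power_less_imp_less_base) simp
  have "c^2 - (1 - s)^2 = 2 * s * (1 - s)" using ss by (simp add: power2_eq_square algebra_simps)
  moreover have "2 * s * (1 - s) > 0" using s0 s1 by simp
  ultimately have "(1 - s)^2 < c^2" by linarith
  then have cs: "1 - s < c" by (rule power_less_imp_less_base) (use c in simp)
  have t: "tc c = (1 - s) / c" unfolding tc_def s_def by simp
  have "0 < tc c" unfolding t using s1 c by simp
  moreover have "tc c < 1" unfolding t using cs c by simp
  moreover have "c * (1 + (tc c)^2) = 2 * tc c"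
  proof -
    have "c * (1 + ((1 - s) / c)^2) = (c^2 + (1 - s)^2) / c" using c by (simp add: field_simps power2_eq_square)
    also have "c^2 + (1 - s)^2 = 2 * (1 - s)" using ss by (simp add: power2_eq_square algebra_simps)
    finally show ?thesis unfolding t by simp
  qed
  ultimately show ?thesis by blast
qed

lemma cC_fst: "(\<lambda>x::complex \<times> complex. fst x) \<in> cC U"
proof -
  have "(\<lambda>x::complex \<times> complex. complex_of_real (x \<bullet> (1,0)) + \<i> * complex_of_real (x \<bullet> (\<i>,0))) \<in> cC U"
    by (rule cC.cadd[OF cC.clin cC.cmul[OF cC.cconst cC.clin]])
  moreover have "(\<lambda>x::complex \<times> complex. complex_of_real (x \<bullet> (1,0)) + \<i> * complex_of_real (x \<bullet> (\<i>,0))) = (\<lambda>x. fst x)"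
    by (auto simp: inner_prod_def complex_eq_iff)
  ultimately show ?thesis by simp
qed

lemma cC_snd: "(\<lambda>x::complex \<times> complex. snd x) \<in> cC U"
proof -
  have "(\<lambda>x::complex \<times> complex. complex_of_real (x \<bullet> (0,1)) + \<i> * complex_of_real (x \<bullet> (0,\<i>))) \<in> cC U"
    by (rule cC.cadd[OF cC.clin cC.cmul[OF cC.cconst cC.clin]])
  moreover have "(\<lambda>x::complex \<times> complex. complex_of_real (x \<bullet> (0,1)) + \<i> * complex_of_real (x \<bullet> (0,\<i>))) = (\<lambda>x. snd x)"
    by (auto simp: inner_prod_def complex_eq_iff)
  ultimately show ?thesis by simp
qed

lemma cC_pmul:
  assumes a1: "(\<lambda>x. fst (P x)) \<in> cC U" and a2: "(\<lambda>x. snd (P x)) \<in> cC U"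
    and b1: "(\<lambda>x. fst (Q x)) \<in> cC U" and b2: "(\<lambda>x. snd (Q x)) \<in> cC U"
    and nz: "\<forall>x\<in>U. pD (P x) (Q x) \<noteq> 0"
  shows "(\<lambda>x. fst (pmul (P x) (Q x))) \<in> cC U \<and> (\<lambda>x. snd (pmul (P x) (Q x))) \<in> cC U"
proof -
  have D: "(\<lambda>x. pD (P x) (Q x)) \<in> cC U"
    unfolding pD_def by (rule cC.cadd[OF cC.cconst cC.cmul[OF cC.cmul[OF cC.ccnj[OF b1] a2] cC.ccnj[OF b2]]])
  have nzc: "\<forall>x\<in>U. cnj (pD (P x) (Q x)) \<noteq> 0" using nz by simp
  have "(\<lambda>x. fst (P x) * fst (Q x) * pD (P x) (Q x) / cnj (pD (P x) (Q x))) \<in> cC U"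
    by (rule cC_div[OF cC.cmul[OF cC.cmul[OF a1 b1] D] cC.ccnj[OF D] nzc])
  moreover have "(\<lambda>x. (snd (Q x) + cnj (fst (Q x)) * snd (P x)) / pD (P x) (Q x)) \<in> cC U"
    by (rule cC_div[OF cC.cadd[OF b2 cC.cmul[OF cC.ccnj[OF b1] a2]] D nz])
  ultimately show ?thesis unfolding pmul_def by simp
qed

lemma cC_mob:
  assumes a1: "(\<lambda>x. fst (P x)) \<in> cC U" and a2: "(\<lambda>x. snd (P x)) \<in> cC U"
    and nz: "\<forall>x\<in>U. 1 - cnj (snd (P x)) * z \<noteq> 0"
  shows "(\<lambda>x. mob (P x) z) \<in> cC U"
  unfolding mob_def
  by (rule cC_div[OF cC.cmul[OF a1 cC_diff[OF cC.cconst a2]] cC_diff[OF cC.cconst cC.cmul[OF cC.ccnj[OF a2] cC.cconst]] nz])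

definition UA :: "(complex \<times> complex) set" where "UA = {p. cmod (snd p) < 1}"

lemma open_UA: "open UA"
  unfolding UA_def by (intro open_Collect_less continuous_intros)

lemma AutP_UA: "AutP \<subseteq> UA"
  by (auto simp: UA_def AutP_iff)

lemma pD_nz':
  assumes "cmod (snd p) < 1" "q \<in> AutP"
  shows "pD p q \<noteq> 0"
proof -
  have a: "cmod (fst q) = 1" "cmod (snd q) < 1" using assms(2) by (auto simp: AutP_iff)
  have "cmod (cnj (fst q) * snd p * cnj (snd q)) < 1"
    using prod_lt1[OF assms(1) a(2)] a(1) by (simp add: norm_mult)
  then have "cnj (fst q) * snd p * cnj (snd q) \<noteq> -1" by auto
  then show ?thesis unfolding pD_def by (metis add_eq_0_iff)
qed

lemma smooth_map_Rq:
  assumes q: "q \<in> AutP"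
  shows "smooth_map AutP AutP (\<lambda>p. pmul p q)"
  unfolding smooth_map_def
proof (intro conjI ballI)
  show "(\<lambda>p. pmul p q) ` AutP \<subseteq> AutP" using pmul_AutP[OF _ q] by auto
  fix x assume x: "x \<in> AutP"
  have nz: "\<forall>y\<in>UA. pD y q \<noteq> 0" using pD_nz'[OF _ q] by (auto simp: UA_def)
  have cc: "(\<lambda>y. fst (pmul y q)) \<in> cC UA \<and> (\<lambda>y. snd (pmul y q)) \<in> cC UA"
    by (rule cC_pmul[where P="\<lambda>y. y" and Q="\<lambda>y. q", OF cC_fst cC_snd cC.cconst cC.cconst nz])
  have "smooth_on UA (\<lambda>p. pmul p q)" by (rule smooth_on_pair[OF open_UA conjunct1[OF cc] conjunct2[OF cc]])
  then show "\<exists>U g. open U \<and> x \<in> U \<and> smooth_on U g \<and> (\<forall>y\<in>AutP \<inter> U. g y = pmul y q)"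
    using open_UA x AutP_UA by blast
qed

lemma quot_iff: "P \<in> quot M \<sigma> \<longleftrightarrow> (\<exists>y\<in>M. P = qcls \<sigma> y)"
  unfolding quot_def by auto

lemma image_qcls: "f ` qcls \<sigma> y = {f y, f (\<sigma> y)}"
  unfolding qcls_def by simp

lemma part2:
  assumes c: "0 < c" "c < 1"
  shows "diffeo_quot_quot AutP (act_c c) AutP act_0"
proof -
  define t where "t = complex_of_real (tc c)"
  have tp: "0 < tc c" "tc c < 1" "c * (1 + (tc c)^2) = 2 * tc c" using tc_props[OF c] by auto
  define q1 where "q1 = (1 :: complex, - t)"
  define q2 where "q2 = (1 :: complex, t)"
  have q1: "q1 \<in> AutP" unfolding q1_def t_def AutP_iff using tp by simp
  have q2: "q2 = pinv q1" unfolding q1_def q2_def pinv_def by simp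
  have q2A: "q2 \<in> AutP" unfolding q2 by (rule pinv_AutP[OF q1])
  have q12: "pmul q1 q2 = (1, 0)" unfolding q2 by (rule pmul_pinv_right[OF q1])
  have q21: "pmul q2 q1 = (1, 0)" unfolding q2 by (rule pmul_pinv_left[OF q1])
  define mc where "mc = (-1 :: complex, complex_of_real c)"
  have mc: "mc \<in> AutP" unfolding mc_def by (rule mc_AutP[OF c])
  have ct: "c * tc c < 1" using mult_strict_mono[of c 1 "tc c" 1] c tp by simp
  have real_id: "(c - tc c) / (1 - c * tc c) = tc c"
  proof -
    have "1 - c * tc c \<noteq> 0" using ct by simp
    moreover have "c - tc c = tc c * (1 - c * tc c)" using tp(3) by (simp add: algebra_simps power2_eq_square)
    ultimately show ?thesis by simp
  qed
  have inter: "pmul mc q1 = pmul q1 (-1, 0)"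
  proof -
    have D: "pD mc q1 = complex_of_real (1 - c * tc c)" unfolding pD_def mc_def q1_def t_def by simp
    have Dnz: "complex_of_real (1 - c * tc c) \<noteq> 0"
    proof
      assume "complex_of_real (1 - c * tc c) = 0"
      then have "1 - c * tc c = 0" by (simp only: of_real_eq_0_iff)
      with ct show False by simp
    qed
    have "snd (pmul mc q1) = complex_of_real ((c - tc c) / (1 - c * tc c))"
      unfolding pmul_def D unfolding mc_def q1_def t_def by simp
    also have "\<dots> = t" unfolding real_id t_def ..
    finally have s1: "snd (pmul mc q1) = t" .
    have e: "cnj (complex_of_real (1 - c * tc c)) = complex_of_real (1 - c * tc c)" by (simp only: complex_cnj_complex_of_real)
    have f1: "fst (pmul mc q1) = -1" unfolding pmul_def D e using Dnz unfolding mc_def q1_def by (simp del: of_real_diff of_real_mult)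
    have "pmul q1 (-1, 0) = (-1, t)" unfolding pmul_def pD_def q1_def by simp
    then show ?thesis using s1 f1 by (metis prod.collapse)
  qed
  define R where "R = (\<lambda>p. pmul p q1)"
  define R' where "R' = (\<lambda>p. pmul p q2)"
  have RA: "R p \<in> AutP" if "p \<in> AutP" for p unfolding R_def by (rule pmul_AutP[OF that q1])
  have R'A: "R' p \<in> AutP" if "p \<in> AutP" for p unfolding R'_def by (rule pmul_AutP[OF that q2A])
  have RR': "R (R' p) = p" if "p \<in> AutP" for p
    unfolding R_def R'_def using pmul_assoc[OF that q2A q1] q21 by simp
  have R'R: "R' (R p) = p" if "p \<in> AutP" for p
    unfolding R_def R'_def using pmul_assoc[OF that q1 q2A] q12 by simp
  have acA: "act_c c p \<in> AutP" if "p \<in> AutP" for p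
    using act_c_eq[OF c that] pmul_AutP[OF that mc] unfolding mc_def by simp
  have a0A: "act_0 p \<in> AutP" if "p \<in> AutP" for p
    using act_0_eq[OF that] pmul_AutP[OF that m10_AutP] by simp
  have Rint: "R (act_c c p) = act_0 (R p)" if "p \<in> AutP" for p
  proof -
    have "R (act_c c p) = pmul (pmul p mc) q1" unfolding R_def act_c_eq[OF c that] mc_def ..
    also have "\<dots> = pmul p (pmul mc q1)" by (rule pmul_assoc[OF that mc q1])
    also have "\<dots> = pmul p (pmul q1 (-1, 0))" unfolding inter ..
    also have "\<dots> = pmul (pmul p q1) (-1, 0)" by (rule pmul_assoc[OF that q1 m10_AutP, symmetric])
    also have "\<dots> = act_0 (R p)" unfolding R_def using act_0_eq[OF pmul_AutP[OF that q1]] by simp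
    finally show ?thesis .
  qed
  have R'int: "R' (act_0 p) = act_c c (R' p)" if "p \<in> AutP" for p
  proof -
    have "act_c c (R' p) = R' (R (act_c c (R' p)))" using R'R[OF acA[OF R'A[OF that]]] by simp
    also have "\<dots> = R' (act_0 (R (R' p)))" using Rint[OF R'A[OF that]] by simp
    also have "\<dots> = R' (act_0 p)" using RR'[OF that] by simp
    finally show ?thesis by simp
  qed
  have KF: "R ` qcls (act_c c) y = qcls act_0 (R y)" if "y \<in> AutP" for y
    unfolding image_qcls using Rint[OF that] by (simp add: qcls_def)
  have KG: "R' ` qcls act_0 y = qcls (act_c c) (R' y)" if "y \<in> AutP" for y
    unfolding image_qcls using R'int[OF that] by (simp add: qcls_def)
  define F where "F = (\<lambda>P. R ` P)"
  define G where "G = (\<lambda>P. R' ` P)"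
  have s1: "\<forall>p\<in>quot AutP (act_c c). F p \<in> quot AutP act_0"
  proof
    fix P assume "P \<in> quot AutP (act_c c)"
    then obtain y where y: "y \<in> AutP" "P = qcls (act_c c) y" by (auto simp: quot_iff)
    show "F P \<in> quot AutP act_0" unfolding quot_iff F_def y(2) KF[OF y(1)] using RA[OF y(1)] by blast
  qed
  have s2: "\<forall>q\<in>quot AutP act_0. G q \<in> quot AutP (act_c c)"
  proof
    fix P assume "P \<in> quot AutP act_0"
    then obtain y where y: "y \<in> AutP" "P = qcls act_0 y" by (auto simp: quot_iff)
    show "G P \<in> quot AutP (act_c c)" unfolding quot_iff G_def y(2) KG[OF y(1)] using R'A[OF y(1)] by blast
  qed
  have s3: "\<forall>p\<in>quot AutP (act_c c). G (F p) = p"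
  proof
    fix P assume "P \<in> quot AutP (act_c c)"
    then obtain y where y: "y \<in> AutP" "P = qcls (act_c c) y" by (auto simp: quot_iff)
    show "G (F P) = P" unfolding G_def F_def y(2) KF[OF y(1)] KG[OF RA[OF y(1)]] R'R[OF y(1)] ..
  qed
  have s4: "\<forall>q\<in>quot AutP act_0. F (G q) = q"
  proof
    fix P assume "P \<in> quot AutP act_0"
    then obtain y where y: "y \<in> AutP" "P = qcls act_0 y" by (auto simp: quot_iff)
    show "F (G P) = P" unfolding G_def F_def y(2) KG[OF y(1)] KF[OF R'A[OF y(1)]] RR'[OF y(1)] ..
  qed
  have s5: "smooth_to_quot AutP AutP act_0 (F \<circ> qcls (act_c c))"
    unfolding smooth_to_quot_def
  proof (intro conjI ballI)
    fix x assume x: "x \<in> AutP"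
    show "(F \<circ> qcls (act_c c)) x \<in> quot AutP act_0" unfolding quot_iff F_def o_def using KF[OF x] RA[OF x] by blast
    have sm: "smooth_map (AutP \<inter> UNIV) AutP R" unfolding R_def using smooth_map_Rq[OF q1] by simp
    show "\<exists>U g. open U \<and> x \<in> U \<and> smooth_map (AutP \<inter> U) AutP g \<and>
              (\<forall>y\<in>AutP \<inter> U. (F \<circ> qcls (act_c c)) y = qcls act_0 (g y))"
      using sm KF unfolding F_def o_def by (intro exI[of _ UNIV] exI[of _ R]) auto
  qed
  have s6: "smooth_to_quot AutP AutP (act_c c) (G \<circ> qcls act_0)"
    unfolding smooth_to_quot_def
  proof (intro conjI ballI)
    fix x assume x: "x \<in> AutP"
    show "(G \<circ> qcls act_0) x \<in> quot AutP (act_c c)" unfolding quot_iff G_def o_def using KG[OF x] R'A[OF x] by blast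
    have sm: "smooth_map (AutP \<inter> UNIV) AutP R'" unfolding R'_def using smooth_map_Rq[OF q2A] by simp
    show "\<exists>U g. open U \<and> x \<in> U \<and> smooth_map (AutP \<inter> U) AutP g \<and>
              (\<forall>y\<in>AutP \<inter> U. (G \<circ> qcls act_0) y = qcls (act_c c) (g y))"
      using sm KG unfolding G_def o_def by (intro exI[of _ UNIV] exI[of _ R']) auto
  qed
  show ?thesis unfolding diffeo_quot_quot_def using s1 s2 s3 s4 s5 s6 by blast
qed

lemma pd_inv:
  assumes P: "p \<in> AutP" and x: "cmod x < 1" and y: "cmod y < 1"
  shows "cmod ((mob p x - mob p y) / (1 - cnj (mob p x) * mob p y)) = cmod ((x - y) / (1 - cnj x * y))"
proof -
  obtain u a where p: "p = (u, a)" by (cases p)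
  have ua: "cmod u = 1" "cmod a < 1" using P p by (auto simp: AutP_iff)
  have uu: "cnj u * u = 1" using unit_cnj[OF ua(1)] by (simp add: mult.commute)
  define dx where "dx = 1 - cnj a * x"
  define dy where "dy = 1 - cnj a * y"
  have dx: "dx \<noteq> 0" unfolding dx_def by (rule den_nz[OF ua(2) x])
  have dy: "dy \<noteq> 0" unfolding dy_def by (rule den_nz[OF ua(2) y])
  have dxc: "cnj dx \<noteq> 0" using dx by simp
  have dxy: "1 - cnj x * y \<noteq> 0" by (rule den_nz[OF x y])
  define A where "A = 1 - a * cnj a"
  have Aeq: "A = complex_of_real (1 - (cmod a)^2)" unfolding A_def using complex_norm_square[of a] by simp
  have "(cmod a)^2 < 1" using prod_lt1[OF ua(2) ua(2)] by (simp add: power2_eq_square)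
  then have A0: "1 - (cmod a)^2 \<noteq> 0" by simp
  have A: "A \<noteq> 0" using Aeq A0 of_real_eq_0_iff by metis
  have mx: "mob p x = u * (x - a) / dx" unfolding mob_def p dx_def by simp
  have my: "mob p y = u * (y - a) / dy" unfolding mob_def p dy_def by simp
  have e1: "mob p x - mob p y = u * (x - y) * A / (dx * dy)"
    unfolding mx my using dx dy by (simp add: field_simps; simp add: A_def dx_def dy_def algebra_simps)
  have e2: "1 - cnj (mob p x) * mob p y = A * (1 - cnj x * y) / (cnj dx * dy)"
  proof -
    have "cnj (mob p x) * mob p y = (cnj u * u) * (cnj x - cnj a) * (y - a) / (cnj dx * dy)"
      unfolding mx my by (simp add: field_simps)
    also have "\<dots> = (cnj x - cnj a) * (y - a) / (cnj dx * dy)" unfolding uu by simp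
    finally have K: "cnj (mob p x) * mob p y = (cnj x - cnj a) * (y - a) / (cnj dx * dy)" .
    have N: "cnj dx * dy - (cnj x - cnj a) * (y - a) = A * (1 - cnj x * y)"
      unfolding dx_def dy_def A_def by (simp add: algebra_simps)
    have "1 - (cnj x - cnj a) * (y - a) / (cnj dx * dy) = (cnj dx * dy - (cnj x - cnj a) * (y - a)) / (cnj dx * dy)"
      using dxc dy by (simp add: diff_divide_distrib)
    then show ?thesis unfolding K N .
  qed
  have "(mob p x - mob p y) / (1 - cnj (mob p x) * mob p y) = u * (x - y) * cnj dx / (dx * (1 - cnj x * y))"
    unfolding e1 e2 using dx dy dxc A dxy by (simp add: field_simps)
  then have "cmod ((mob p x - mob p y) / (1 - cnj (mob p x) * mob p y)) = cmod (x - y) * cmod dx / (cmod dx * cmod (1 - cnj x * y))"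
    using ua by (simp add: norm_mult norm_divide)
  also have "\<dots> = cmod ((x - y) / (1 - cnj x * y))" using dx by (simp add: norm_divide)
  finally show ?thesis .
qed

lemma roots2:
  fixes z1 z2 w1 w2 :: complex
  assumes "z1 + z2 = w1 + w2" "z1 * z2 = w1 * w2"
  shows "(z1 = w1 \<and> z2 = w2) \<or> (z1 = w2 \<and> z2 = w1)"
proof -
  have "(z1 - w1) * (z1 - w2) = z1 * z1 - z1 * (w1 + w2) + w1 * w2" by (simp add: algebra_simps)
  also have "\<dots> = 0" unfolding assms[symmetric] by (simp add: algebra_simps)
  finally have "z1 = w1 \<or> z1 = w2" by simp
  then show ?thesis using assms(1) by auto
qed

lemma fix2:
  fixes t :: real
  assumes X: "x \<in> AutP" and t: "0 < t" "t < 1"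
    and e1: "mob x (of_real t) = of_real t" and e2: "mob x (- of_real t) = - of_real t"
  shows "x = (1, 0)"
proof -
  obtain v b where xx: "x = (v, b)" by (cases x)
  have vb: "cmod v = 1" "cmod b < 1" using X xx by (auto simp: AutP_iff)
  have tt: "cmod (complex_of_real t) < 1" "cmod (- complex_of_real t) < 1" using t by auto
  have d1: "1 - cnj b * of_real t \<noteq> 0" by (rule den_nz[OF vb(2) tt(1)])
  have d2: "1 - cnj b * (- of_real t) \<noteq> 0" by (rule den_nz[OF vb(2) tt(2)])
  have q1: "v * (of_real t - b) = of_real t * (1 - cnj b * of_real t)"
    using e1 d1 unfolding mob_def xx by (simp add: field_simps)
  have q2: "v * (- of_real t - b) = - of_real t * (1 - cnj b * (- of_real t))"
    using e2 d2 unfolding mob_def xx by (simp add: field_simps)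
  have S: "v * (of_real t - b) - v * (- of_real t - b) = of_real t * (1 - cnj b * of_real t) - (- of_real t * (1 - cnj b * (- of_real t)))"
    using q1 q2 by (rule arg_cong2[where f="(-)"])
  have l1: "v * (of_real t - b) - v * (- of_real t - b) = 2 * of_real t * v" by (simp add: algebra_simps)
  have r1: "of_real t * (1 - cnj b * of_real t) - (- of_real t * (1 - cnj b * (- of_real t))) = 2 * of_real t * (1::complex)" by (simp add: algebra_simps)
  have "2 * of_real t * v = 2 * of_real t * (1::complex)" using S l1 r1 by simp
  then have v: "v = 1" using t by simp
  have S2: "v * (of_real t - b) + v * (- of_real t - b) = of_real t * (1 - cnj b * of_real t) + (- of_real t * (1 - cnj b * (- of_real t)))"
    using q1 q2 by (rule arg_cong2[where f="(+)"])
  have l2: "v * (of_real t - b) + v * (- of_real t - b) = - 2 * b" unfolding v by (simp add: algebra_simps)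
  have r2: "of_real t * (1 - cnj b * of_real t) + (- of_real t * (1 - cnj b * (- of_real t))) = - 2 * cnj b * of_real t * of_real t" by (simp add: algebra_simps)
  have "2 * b = 2 * cnj b * of_real t * of_real t" using S2 l2 r2 by simp
  then have "b = cnj b * of_real (t * t)" by simp
  then have "cmod b = cmod (cnj b * of_real (t * t))" by (rule arg_cong)
  also have "\<dots> = cmod b * (t * t)" by (simp add: norm_mult)
  finally have bb: "cmod b = cmod b * (t * t)" .
  have tt1: "t * t < 1" using mult_strict_mono[of t 1 t 1] t by simp
  have "cmod b = 0"
  proof (rule ccontr)
    assume "cmod b \<noteq> 0"
    then have "0 < cmod b" by simp
    from mult_strict_left_mono[OF tt1 this] bb show False by simp
  qed
  then show ?thesis using xx v by simp
qed

lemma swap2: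
  fixes t :: real
  assumes X: "x \<in> AutP" and t: "0 < t" "t < 1"
    and e1: "mob x (of_real t) = - of_real t" and e2: "mob x (- of_real t) = of_real t"
  shows "x = (-1, 0)"
proof -
  obtain v b where xx: "x = (v, b)" by (cases x)
  have vb: "cmod v = 1" "cmod b < 1" using X xx by (auto simp: AutP_iff)
  have tt: "cmod (complex_of_real t) < 1" "cmod (- complex_of_real t) < 1" using t by auto
  have d1: "1 - cnj b * of_real t \<noteq> 0" by (rule den_nz[OF vb(2) tt(1)])
  have d2: "1 - cnj b * (- of_real t) \<noteq> 0" by (rule den_nz[OF vb(2) tt(2)])
  have q1: "v * (of_real t - b) = - of_real t * (1 - cnj b * of_real t)"
    using e1 d1 unfolding mob_def xx by (simp add: field_simps)
  have q2: "v * (- of_real t - b) = of_real t * (1 - cnj b * (- of_real t))"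
    using e2 d2 unfolding mob_def xx by (simp add: field_simps)
  have S: "v * (of_real t - b) - v * (- of_real t - b) = - of_real t * (1 - cnj b * of_real t) - (of_real t * (1 - cnj b * (- of_real t)))"
    using q1 q2 by (rule arg_cong2[where f="(-)"])
  have l1: "v * (of_real t - b) - v * (- of_real t - b) = 2 * of_real t * v" by (simp add: algebra_simps)
  have r1: "- of_real t * (1 - cnj b * of_real t) - (of_real t * (1 - cnj b * (- of_real t))) = 2 * of_real t * (-1::complex)" by (simp add: algebra_simps)
  have "2 * of_real t * v = 2 * of_real t * (-1::complex)" using S l1 r1 by simp
  then have v: "v = -1" using t mult_left_cancel[of "2 * of_real t" v "-1"] by simp
  have S2: "v * (of_real t - b) + v * (- of_real t - b) = - of_real t * (1 - cnj b * of_real t) + (of_real t * (1 - cnj b * (- of_real t)))"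
    using q1 q2 by (rule arg_cong2[where f="(+)"])
  have l2: "v * (of_real t - b) + v * (- of_real t - b) = 2 * b" unfolding v by (simp add: algebra_simps)
  have r2: "- of_real t * (1 - cnj b * of_real t) + (of_real t * (1 - cnj b * (- of_real t))) = 2 * cnj b * of_real t * of_real t" by (simp add: algebra_simps)
  have "2 * b = 2 * cnj b * of_real t * of_real t" using S2 l2 r2 by simp
  then have "b = cnj b * of_real (t * t)" by simp
  then have "cmod b = cmod (cnj b * of_real (t * t))" by (rule arg_cong)
  also have "\<dots> = cmod b * (t * t)" by (simp add: norm_mult)
  finally have bb: "cmod b = cmod b * (t * t)" .
  have tt1: "t * t < 1" using mult_strict_mono[of t 1 t 1] t by simp
  have "cmod b = 0"
  proof (rule ccontr)
    assume "cmod b \<noteq> 0"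
    then have "0 < cmod b" by simp
    from mult_strict_left_mono[OF tt1 this] bb show False by simp
  qed
  then show ?thesis using xx v by simp
qed

definition hmap :: "real \<Rightarrow> complex \<times> complex \<Rightarrow> complex \<times> complex" where
  "hmap c p = (mob p (of_real (tc c)) + mob p (- of_real (tc c)), mob p (of_real (tc c)) * mob p (- of_real (tc c)))"

lemma mob_id [simp]: "mob (1, 0) z = z" by (simp add: mob_def)

lemma mob_m10 [simp]: "mob (-1, 0) z = - z" by (simp add: mob_def)

lemma m10_sq: "pmul (-1, 0) (-1, 0) = (1, 0)" by (simp add: pmul_def pD_def)

lemma act0_AutP: "p \<in> AutP \<Longrightarrow> act_0 p \<in> AutP"
  using act_0_eq pmul_AutP m10_AutP by metis

lemma act0_act0: "p \<in> AutP \<Longrightarrow> act_0 (act_0 p) = p"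
proof -
  assume P: "p \<in> AutP"
  have "act_0 (act_0 p) = pmul (pmul p (-1, 0)) (-1, 0)" using act_0_eq[OF act0_AutP[OF P]] act_0_eq[OF P] by simp
  also have "\<dots> = pmul p (pmul (-1, 0) (-1, 0))" by (rule pmul_assoc[OF P m10_AutP m10_AutP])
  finally show ?thesis by (simp add: m10_sq)
qed

lemma mob_act0: "p \<in> AutP \<Longrightarrow> cmod z < 1 \<Longrightarrow> mob (act_0 p) z = mob p (- z)"
  using act_0_eq mob_pmul[OF _ m10_AutP] by (metis mob_m10)

lemma qcls_act0: "p \<in> AutP \<Longrightarrow> qcls act_0 (act_0 p) = qcls act_0 p"
  unfolding qcls_def using act0_act0 by auto

lemma T_disc: "0 < c \<Longrightarrow> c < 1 \<Longrightarrow> cmod (complex_of_real (tc c)) < 1 \<and> cmod (- complex_of_real (tc c)) < 1"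
  using tc_props[of c] by auto

lemma hmap_act0: "0 < c \<Longrightarrow> c < 1 \<Longrightarrow> p \<in> AutP \<Longrightarrow> hmap c (act_0 p) = hmap c p"
  unfolding hmap_def using mob_act0 T_disc by (simp add: add.commute mult.commute)

lemma hmap_Lset:
  assumes c: "0 < c" "c < 1" and P: "p \<in> AutP"
  shows "hmap c p \<in> Lset c"
proof -
  define T where "T = complex_of_real (tc c)"
  have tp: "0 < tc c" "tc c < 1" "c * (1 + (tc c)^2) = 2 * tc c" using tc_props[OF c] by auto
  have Td: "cmod T < 1" "cmod (- T) < 1" using T_disc[OF c] unfolding T_def by auto
  define z1 where "z1 = mob p T"
  define z2 where "z2 = mob p (- T)"
  have z: "z1 \<in> disc" "z2 \<in> disc" unfolding z1_def z2_def in_disc using mob_disc[OF P] Td by auto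
  have "cmod ((z1 - z2) / (1 - cnj z1 * z2)) = cmod ((T - - T) / (1 - cnj T * - T))"
    unfolding z1_def z2_def by (rule pd_inv[OF P Td])
  also have "(T - - T) / (1 - cnj T * - T) = complex_of_real (2 * tc c / (1 + (tc c)^2))"
    unfolding T_def by (simp add: power2_eq_square)
  also have "2 * tc c / (1 + (tc c)^2) = c"
  proof -
    have nz: "1 + (tc c)^2 \<noteq> 0" by (metis add_pos_nonneg zero_le_power2 zero_less_one less_irrefl)
    show ?thesis using nz tp(3) by (simp add: field_simps; simp add: algebra_simps)
  qed
  finally have pd: "cmod ((z1 - z2) / (1 - cnj z1 * z2)) = c" using c by simp
  have "hmap c p = (z1 + z2, z1 * z2)" unfolding hmap_def z1_def z2_def T_def ..
  then show ?thesis unfolding Lset_def using z pd by blast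
qed

lemma hmap_inj:
  assumes c: "0 < c" "c < 1" and P: "p \<in> AutP" and Q: "q \<in> AutP" and H: "hmap c p = hmap c q"
  shows "q = p \<or> q = act_0 p"
proof -
  define T where "T = complex_of_real (tc c)"
  have tp: "0 < tc c" "tc c < 1" using tc_props[OF c] by auto
  have Td: "cmod T < 1" "cmod (- T) < 1" using T_disc[OF c] unfolding T_def by auto
  have r: "(mob p T = mob q T \<and> mob p (- T) = mob q (- T)) \<or> (mob p T = mob q (- T) \<and> mob p (- T) = mob q T)"
    using H unfolding hmap_def T_def by (intro roots2) auto
  define x where "x = pmul (pinv q) p"
  have iq: "pinv q \<in> AutP" by (rule pinv_AutP[OF Q])
  have X: "x \<in> AutP" unfolding x_def by (rule pmul_AutP[OF iq P])
  have mx: "mob x z = mob (pinv q) (mob p z)" if "cmod z < 1" for z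
    unfolding x_def using mob_pmul[OF iq P that] by simp
  have li: "mob (pinv q) (mob q z) = z" if "cmod z < 1" for z
    using mob_pmul[OF iq Q that] pmul_pinv_left[OF Q] by simp
  have px: "p = pmul q x"
  proof -
    have "pmul q x = pmul (pmul q (pinv q)) p" unfolding x_def by (rule pmul_assoc[OF Q iq P, symmetric])
    then show ?thesis using pmul_pinv_right[OF Q] by simp
  qed
  from r show ?thesis
  proof
    assume a: "mob p T = mob q T \<and> mob p (- T) = mob q (- T)"
    have "x = (1, 0)"
      by (rule fix2[OF X tp(1) tp(2)]) (use a mx li Td in \<open>simp_all add: T_def\<close>)
    then show ?thesis using px by simp
  next
    assume a: "mob p T = mob q (- T) \<and> mob p (- T) = mob q T"
    have "x = (-1, 0)"
      by (rule swap2[OF X tp(1) tp(2)]) (use a mx li Td in \<open>simp_all add: T_def\<close>)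
    then have "p = act_0 q" using px act_0_eq[OF Q] by simp
    then show ?thesis using act0_act0[OF Q] by simp
  qed
qed

definition liftp :: "real \<Rightarrow> complex \<Rightarrow> complex \<Rightarrow> complex \<times> complex" where
  "liftp c z1 z2 = pmul (1, - z1) ((z1 - z2) / (complex_of_real c * (1 - cnj z1 * z2)), complex_of_real (tc c))"

lemma liftp_props:
  assumes c: "0 < c" "c < 1" and z1: "cmod z1 < 1" and z2: "cmod z2 < 1"
    and pd: "cmod ((z1 - z2) / (1 - cnj z1 * z2)) = c"
  shows "liftp c z1 z2 \<in> AutP \<and> hmap c (liftp c z1 z2) = (z1 + z2, z1 * z2)"
proof -
  define T where "T = complex_of_real (tc c)"
  have tp: "0 < tc c" "tc c < 1" "c * (1 + (tc c)^2) = 2 * tc c" using tc_props[OF c] by auto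
  have Td: "cmod T < 1" "cmod (- T) < 1" using T_disc[OF c] unfolding T_def by auto
  define d where "d = 1 - cnj z1 * z2"
  have d: "d \<noteq> 0" unfolding d_def by (rule den_nz[OF z1 z2])
  define w where "w = (z1 - z2) / (complex_of_real c * d)"
  have "cmod w = cmod ((z1 - z2) / d) / c" unfolding w_def using c by (simp add: norm_mult norm_divide)
  then have w1: "cmod w = 1" using pd c unfolding d_def by simp
  have A1: "(1, - z1) \<in> AutP" using z1 by (simp add: AutP_iff)
  have A2: "(w, T) \<in> AutP" using w1 Td by (simp add: AutP_iff)
  have L: "liftp c z1 z2 = pmul (1, - z1) (w, T)" unfolding liftp_def w_def d_def T_def ..
  have LA: "liftp c z1 z2 \<in> AutP" unfolding L by (rule pmul_AutP[OF A1 A2])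
  have m1: "mob (liftp c z1 z2) T = z1"
    unfolding L using mob_pmul[OF A1 A2 Td(1)] by (simp add: mob_def)
  have "mob (w, T) (- T) = - w * complex_of_real c"
  proof -
    have "1 + T * T \<noteq> 0" unfolding T_def using tp
      by (metis add_pos_pos of_real_1 of_real_add of_real_eq_0_iff of_real_mult zero_less_mult_iff less_irrefl zero_less_one)
    moreover have "2 * T = complex_of_real c * (1 + T * T)" unfolding T_def using tp(3)
      by (metis of_real_1 of_real_add of_real_mult of_real_numeral power2_eq_square)
    ultimately show ?thesis unfolding mob_def T_def by (simp add: field_simps)
  qed
  also have "- w * complex_of_real c = (z2 - z1) / d" unfolding w_def using c d by (simp add: field_simps)
  finally have mw: "mob (w, T) (- T) = (z2 - z1) / d" .
  have zz: "1 - cnj z1 * z1 \<noteq> 0" by (rule den_nz[OF z1 z1])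
  have "mob (1, - z1) ((z2 - z1) / d) = z2"
  proof -
    have e1: "((z2 - z1) / d + z1) = z2 * (1 - cnj z1 * z1) / d" unfolding d_def using d unfolding d_def
      by (simp add: field_simps; simp add: algebra_simps)
    have e2: "1 + cnj z1 * ((z2 - z1) / d) = (1 - cnj z1 * z1) / d" unfolding d_def using d unfolding d_def
      by (simp add: field_simps; simp add: algebra_simps)
    have "mob (1, - z1) ((z2 - z1) / d) = ((z2 - z1) / d + z1) / (1 + cnj z1 * ((z2 - z1) / d))"
      by (simp add: mob_def)
    also have "\<dots> = (z2 * (1 - cnj z1 * z1) / d) / ((1 - cnj z1 * z1) / d)" unfolding e1 e2 ..
    also have "\<dots> = z2" using zz d by simp
    finally show ?thesis .
  qed
  then have m2: "mob (liftp c z1 z2) (- T) = z2"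
    unfolding L using mob_pmul[OF A1 A2 Td(2)] mw by simp
  show ?thesis using LA m1 m2 unfolding hmap_def T_def by simp
qed

lemma cC_mono: "f \<in> cC U \<Longrightarrow> V \<subseteq> U \<Longrightarrow> f \<in> cC V"
proof (induction rule: cC.induct)
  case (cconst k) show ?case by (rule cC.cconst)
next
  case (clin v) show ?case by (rule cC.clin)
next
  case (cadd f g) then show ?case by (intro cC.cadd) auto
next
  case (cmul f g) then show ?case by (intro cC.cmul) auto
next
  case (ccnj f) then show ?case by (intro cC.ccnj) auto
next
  case (cinv f)
  have "f \<in> cC V" using cinv.IH cinv.prems by blast
  moreover have "\<forall>x\<in>V. f x \<noteq> 0" using cinv.hyps(2) cinv.prems by blast
  ultimately show ?case by (rule cC.cinv)
next
  case (csq f S)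
  have "f \<in> cC V" using csq.IH csq.prems by blast
  moreover have "\<forall>x\<in>V. S x \<noteq> 0 \<and> S x ^ 2 = f x \<and> isCont S x" using csq.hyps(2) csq.prems by blast
  ultimately show ?case by (rule cC.csq)
qed

lemma cC_cont: "open U \<Longrightarrow> f \<in> cC U \<Longrightarrow> continuous_on U f"
  using cC_key[of U f] by (intro continuous_at_imp_continuous_on) blast

lemma open_nz:
  assumes "open U" "f \<in> cC U"
  shows "open {y \<in> U. f y \<noteq> 0}"
proof -
  have "open (U \<inter> f -` (- {0}))"
    by (rule continuous_open_preimage[OF cC_cont[OF assms] assms(1)]) (simp add: open_Compl)
  moreover have "U \<inter> f -` (- {0}) = {y \<in> U. f y \<noteq> 0}" by auto
  ultimately show ?thesis by simp
qed

lemma Re_pos_not_nonpos: "0 < Re w \<Longrightarrow> w \<notin> \<real>\<^sub>\<le>\<^sub>0"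
  by (auto elim!: nonpos_Reals_cases)

lemma pd_sym: "cmod ((b2 - b1) / (1 - cnj b2 * b1)) = cmod ((b1 - b2) / (1 - cnj b1 * b2))"
proof -
  have "cnj (1 - cnj b1 * b2) = 1 - cnj b2 * b1" by (simp add: mult.commute)
  then have "cmod (1 - cnj b2 * b1) = cmod (1 - cnj b1 * b2)" by (metis complex_mod_cnj)
  moreover have "cmod (b2 - b1) = cmod (b1 - b2)" by (rule norm_minus_commute)
  ultimately show ?thesis by (simp add: norm_divide)
qed

lemma smooth_hmap:
  assumes c: "0 < c" "c < 1"
  shows "smooth_on UA (hmap c)"
proof -
  define T where "T = complex_of_real (tc c)"
  have Td: "cmod T < 1" "cmod (- T) < 1" using T_disc[OF c] unfolding T_def by auto
  have nz1: "\<forall>p\<in>UA. 1 - cnj (snd p) * T \<noteq> 0"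
  proof
    fix p assume "p \<in> UA"
    then show "1 - cnj (snd p) * T \<noteq> 0" by (intro den_nz[OF _ Td(1)]) (simp add: UA_def)
  qed
  have nz2: "\<forall>p\<in>UA. 1 - cnj (snd p) * (- T) \<noteq> 0"
  proof
    fix p assume "p \<in> UA"
    then show "1 - cnj (snd p) * (- T) \<noteq> 0" by (intro den_nz[OF _ Td(2)]) (simp add: UA_def)
  qed
  have m1: "(\<lambda>p. mob p T) \<in> cC UA" by (rule cC_mob[where P="\<lambda>p. p", OF cC_fst cC_snd nz1])
  have m2: "(\<lambda>p. mob p (- T)) \<in> cC UA" by (rule cC_mob[where P="\<lambda>p. p", OF cC_fst cC_snd nz2])
  have "(\<lambda>p. fst (hmap c p)) \<in> cC UA" unfolding hmap_def T_def[symmetric] using cC.cadd[OF m1 m2] by simp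
  moreover have "(\<lambda>p. snd (hmap c p)) \<in> cC UA" unfolding hmap_def T_def[symmetric] using cC.cmul[OF m1 m2] by simp
  ultimately show ?thesis by (rule smooth_on_pair[OF open_UA])
qed

lemma local_lift:
  assumes c: "0 < c" "c < 1" and x0: "x0 \<in> Lset c"
  shows "\<exists>V G. open V \<and> x0 \<in> V \<and> smooth_on V G \<and> (\<forall>y\<in>Lset c \<inter> V. G y \<in> AutP \<and> hmap c (G y) = y)"
proof -
  obtain a1 a2 where x0e: "x0 = (a1 + a2, a1 * a2)" and a: "a1 \<in> disc" "a2 \<in> disc"
    and apd: "cmod ((a1 - a2) / (1 - cnj a1 * a2)) = c"
    using x0 unfolding Lset_def by blast
  have ad: "cmod a1 < 1" "cmod a2 < 1" using a by (auto simp: in_disc)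
  define \<delta> where "\<delta> = a1 - a2"
  have \<delta>: "\<delta> \<noteq> 0" using apd c unfolding \<delta>_def by auto
  define fq :: "complex \<times> complex \<Rightarrow> complex" where "fq = (\<lambda>y. fst y * fst y - 4 * snd y)"
  have fqC: "fq \<in> cC U" for U unfolding fq_def
    by (rule cC_diff[OF cC.cmul[OF cC_fst cC_fst] cC.cmul[OF cC.cconst cC_snd]])
  define B where "B = {y. 0 < Re (fq y / \<delta>^2)}"
  have oB: "open B" unfolding B_def fq_def by (intro open_Collect_less continuous_intros) (use \<delta> in auto)
  define S where "S = (\<lambda>y. \<delta> * csqrt (fq y / \<delta>^2))"
  have SP: "\<forall>y\<in>B. S y \<noteq> 0 \<and> S y ^ 2 = fq y \<and> isCont S y"
  proof
    fix y assume y: "y \<in> B"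
    have re: "0 < Re (fq y / \<delta>^2)" using y B_def by simp
    have nz: "fq y / \<delta>^2 \<noteq> 0" using re by auto
    have "S y \<noteq> 0" unfolding S_def using \<delta> nz by simp
    moreover have "S y ^ 2 = fq y" unfolding S_def using \<delta> by (simp add: power_mult_distrib)
    moreover have "isCont S y"
    proof -
      have nn: "fq y / \<delta>^2 \<notin> \<real>\<^sub>\<le>\<^sub>0" by (rule Re_pos_not_nonpos[OF re])
      have "isCont (\<lambda>y. fq y / \<delta>^2) y" unfolding fq_def by (intro continuous_intros) (use \<delta> in simp)
      then have "isCont (\<lambda>y. csqrt (fq y / \<delta>^2)) y" using nn by (rule isCont_csqrt')
      then show ?thesis unfolding S_def by (intro continuous_intros)
    qed
    ultimately show "S y \<noteq> 0 \<and> S y ^ 2 = fq y \<and> isCont S y" by blast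
  qed
  have SC: "S \<in> cC B" by (rule cC.csq[OF fqC SP])
  define Z1 where "Z1 = (\<lambda>y. (fst y + S y) / 2)"
  define Z2 where "Z2 = (\<lambda>y. (fst y - S y) / 2)"
  have Z1C: "Z1 \<in> cC B" unfolding Z1_def by (rule cC_div[OF cC.cadd[OF cC_fst SC] cC.cconst]) simp
  have Z2C: "Z2 \<in> cC B" unfolding Z2_def by (rule cC_div[OF cC_diff[OF cC_fst SC] cC.cconst]) simp
  define dfun where "dfun = (\<lambda>y. 1 - cnj (Z1 y) * Z2 y)"
  have dC: "dfun \<in> cC B" unfolding dfun_def by (rule cC_diff[OF cC.cconst cC.cmul[OF cC.ccnj[OF Z1C] Z2C]])
  define B1 where "B1 = {y \<in> B. dfun y \<noteq> 0}"
  have oB1: "open B1" unfolding B1_def by (rule open_nz[OF oB dC])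
  have B1B: "B1 \<subseteq> B" unfolding B1_def by auto
  define T where "T = complex_of_real (tc c)"
  define W where "W = (\<lambda>y. (Z1 y - Z2 y) / (complex_of_real c * dfun y))"
  have WC: "W \<in> cC B1" unfolding W_def
    by (rule cC_div[OF cC_diff[OF cC_mono[OF Z1C B1B] cC_mono[OF Z2C B1B]] cC.cmul[OF cC.cconst cC_mono[OF dC B1B]]])
      (use c in \<open>auto simp: B1_def\<close>)
  define Dd where "Dd = (\<lambda>y. 1 + cnj (W y) * (- Z1 y) * cnj T)"
  have DdC: "Dd \<in> cC B1" unfolding Dd_def
    by (rule cC.cadd[OF cC.cconst cC.cmul[OF cC.cmul[OF cC.ccnj[OF WC] cC_neg[OF cC_mono[OF Z1C B1B]]] cC.cconst]])
  define V where "V = {y \<in> B1. Dd y \<noteq> 0}"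
  have oV: "open V" unfolding V_def by (rule open_nz[OF oB1 DdC])
  have VB1: "V \<subseteq> B1" unfolding V_def by auto
  have VB: "V \<subseteq> B" using VB1 B1B by auto
  define G where "G = (\<lambda>y. pmul (1, - Z1 y) (W y, T))"
  have pDe: "pD (1, - Z1 y) (W y, T) = Dd y" for y unfolding pD_def Dd_def by simp
  have a1C: "(\<lambda>y. fst (1::complex, - Z1 y)) \<in> cC V" using cC.cconst[of 1 V] by simp
  have a2C: "(\<lambda>y. snd (1::complex, - Z1 y)) \<in> cC V" using cC_neg[OF cC_mono[OF Z1C VB]] by simp
  have b1C: "(\<lambda>y. fst (W y, T)) \<in> cC V" using cC_mono[OF WC VB1] by simp
  have b2C: "(\<lambda>y. snd (W y, T)) \<in> cC V" using cC.cconst[of T V] by simp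
  have nzV: "\<forall>y\<in>V. pD (1, - Z1 y) (W y, T) \<noteq> 0" unfolding pDe V_def by auto
  have GC: "(\<lambda>y. fst (G y)) \<in> cC V \<and> (\<lambda>y. snd (G y)) \<in> cC V"
    unfolding G_def by (rule cC_pmul[OF a1C a2C b1C b2C nzV])
  have sm: "smooth_on V G" by (rule smooth_on_pair[OF oV conjunct1[OF GC] conjunct2[OF GC]])
  have fq0: "fq x0 = \<delta>^2" unfolding fq_def x0e \<delta>_def by (simp add: power2_eq_square algebra_simps)
  have fq01: "fq x0 / \<delta>^2 = 1" using fq0 \<delta> by simp
  have x0B: "x0 \<in> B" unfolding B_def using fq01 by simp
  have S0: "S x0 = \<delta>" unfolding S_def using fq01 by simp
  have Z10: "Z1 x0 = a1" unfolding Z1_def using S0 unfolding x0e \<delta>_def by simp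
  have Z20: "Z2 x0 = a2" unfolding Z2_def using S0 unfolding x0e \<delta>_def by simp
  have d0: "dfun x0 \<noteq> 0" unfolding dfun_def Z10 Z20 by (rule den_nz[OF ad])
  have x0B1: "x0 \<in> B1" unfolding B1_def using x0B d0 by simp
  define w where "w = (a1 - a2) / (complex_of_real c * (1 - cnj a1 * a2))"
  have W0: "W x0 = w" unfolding W_def w_def Z10 Z20 dfun_def by simp
  have "cmod w = cmod ((a1 - a2) / (1 - cnj a1 * a2)) / c" unfolding w_def using c by (simp add: norm_mult norm_divide)
  then have w1: "cmod w = 1" using apd c by simp
  have A1: "(1, - a1) \<in> AutP" using ad by (simp add: AutP_iff)
  have A2: "(w, T) \<in> AutP" using w1 T_disc[OF c] unfolding T_def by (simp add: AutP_iff)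
  have "Dd x0 = pD (1, - a1) (w, T)" unfolding pDe[symmetric] Z10 W0 ..
  then have "Dd x0 \<noteq> 0" using pD_nz[OF A1 A2] by simp
  then have x0V: "x0 \<in> V" unfolding V_def using x0B1 by simp
  have "\<forall>y\<in>Lset c \<inter> V. G y \<in> AutP \<and> hmap c (G y) = y"
  proof
    fix y assume y: "y \<in> Lset c \<inter> V"
    obtain b1 b2 where ye: "y = (b1 + b2, b1 * b2)" and b: "b1 \<in> disc" "b2 \<in> disc"
      and bpd: "cmod ((b1 - b2) / (1 - cnj b1 * b2)) = c"
      using y unfolding Lset_def by blast
    have bd: "cmod b1 < 1" "cmod b2 < 1" using b by (auto simp: in_disc)
    have yB: "y \<in> B" using y VB by auto
    have "S y ^ 2 = fq y" using SP yB by blast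
    also have "fq y = (b1 - b2)^2" unfolding fq_def ye by (simp add: power2_eq_square algebra_simps)
    finally have "S y = b1 - b2 \<or> S y = - (b1 - b2)" by (simp add: power2_eq_iff)
    then have zz: "(Z1 y = b1 \<and> Z2 y = b2) \<or> (Z1 y = b2 \<and> Z2 y = b1)"
      unfolding Z1_def Z2_def ye by (auto simp: field_simps)
    have Gy: "G y = liftp c (Z1 y) (Z2 y)" unfolding G_def liftp_def W_def dfun_def T_def ..
    have "liftp c (Z1 y) (Z2 y) \<in> AutP \<and> hmap c (liftp c (Z1 y) (Z2 y)) = (Z1 y + Z2 y, Z1 y * Z2 y)"
      using zz
    proof
      assume "Z1 y = b1 \<and> Z2 y = b2"
      then show ?thesis using liftp_props[OF c bd bpd] by simp
    next
      assume "Z1 y = b2 \<and> Z2 y = b1"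
      then show ?thesis using liftp_props[OF c bd(2) bd(1)] bpd pd_sym[of b2 b1] by simp
    qed
    moreover have "(Z1 y + Z2 y, Z1 y * Z2 y) = y" using zz unfolding ye by (auto simp: add.commute mult.commute)
    ultimately show "G y \<in> AutP \<and> hmap c (G y) = y" unfolding Gy by simp
  qed
  then show ?thesis using oV x0V sm by blast
qed

lemma part1:
  assumes c: "0 < c" "c < 1"
  shows "diffeo_sub_quot (Lset c) AutP act_0"
proof -
  define Lf where "Lf = (\<lambda>x. SOME p. p \<in> AutP \<and> hmap c p = x)"
  have Lf: "Lf x \<in> AutP \<and> hmap c (Lf x) = x" if x: "x \<in> Lset c" for x
  proof -
    obtain b1 b2 where xe: "x = (b1 + b2, b1 * b2)" and b: "b1 \<in> disc" "b2 \<in> disc"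
      and bpd: "cmod ((b1 - b2) / (1 - cnj b1 * b2)) = c"
      using x unfolding Lset_def by blast
    have bd: "cmod b1 < 1" "cmod b2 < 1" using b by (auto simp: in_disc)
    have "\<exists>p. p \<in> AutP \<and> hmap c p = x" using liftp_props[OF c bd bpd] xe by blast
    then show ?thesis unfolding Lf_def by (rule someI_ex)
  qed
  define F where "F = (\<lambda>x. qcls act_0 (Lf x))"
  define Gq where "Gq = (\<lambda>P. hmap c (SOME p. p \<in> P))"
  have Gq: "Gq (qcls act_0 y) = hmap c y" if y: "y \<in> AutP" for y
  proof -
    have "(SOME p. p \<in> qcls act_0 y) \<in> qcls act_0 y" by (rule someI[of _ y]) (simp add: qcls_def)
    then have "(SOME p. p \<in> qcls act_0 y) = y \<or> (SOME p. p \<in> qcls act_0 y) = act_0 y" by (simp add: qcls_def)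
    then show ?thesis unfolding Gq_def using hmap_act0[OF c y] by auto
  qed
  have same: "qcls act_0 q = qcls act_0 p" if "p \<in> AutP" "q \<in> AutP" "hmap c p = hmap c q" for p q
    using hmap_inj[OF c that] qcls_act0[OF that(1)] by auto
  have s1: "\<forall>x\<in>Lset c. F x \<in> quot AutP act_0" unfolding F_def quot_iff using Lf by blast
  have s2: "\<forall>p\<in>quot AutP act_0. Gq p \<in> Lset c"
  proof
    fix P assume "P \<in> quot AutP act_0"
    then obtain y where y: "y \<in> AutP" "P = qcls act_0 y" by (auto simp: quot_iff)
    show "Gq P \<in> Lset c" unfolding y(2) Gq[OF y(1)] by (rule hmap_Lset[OF c y(1)])
  qed
  have s3: "\<forall>x\<in>Lset c. Gq (F x) = x" unfolding F_def using Gq Lf by simp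
  have s4: "\<forall>p\<in>quot AutP act_0. F (Gq p) = p"
  proof
    fix P assume "P \<in> quot AutP act_0"
    then obtain y where y: "y \<in> AutP" "P = qcls act_0 y" by (auto simp: quot_iff)
    have hy: "hmap c y \<in> Lset c" by (rule hmap_Lset[OF c y(1)])
    have "F (Gq P) = qcls act_0 (Lf (hmap c y))" unfolding y(2) Gq[OF y(1)] F_def ..
    also have "\<dots> = qcls act_0 y" using same[OF y(1)] Lf[OF hy] by simp
    finally show "F (Gq P) = P" using y(2) by simp
  qed
  have s5: "smooth_to_quot (Lset c) AutP act_0 F"
    unfolding smooth_to_quot_def
  proof (intro conjI ballI)
    fix x assume x: "x \<in> Lset c"
    show "F x \<in> quot AutP act_0" using s1 x by blast
    obtain V G where V: "open V" "x \<in> V" "smooth_on V G" and GV: "\<forall>y\<in>Lset c \<inter> V. G y \<in> AutP \<and> hmap c (G y) = y"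
      using local_lift[OF c x] by blast
    have sm: "smooth_map (Lset c \<inter> V) AutP G"
      unfolding smooth_map_def using GV V by blast
    have eq: "\<forall>y\<in>Lset c \<inter> V. F y = qcls act_0 (G y)"
    proof
      fix y assume y: "y \<in> Lset c \<inter> V"
      have "hmap c (G y) = hmap c (Lf y)" using GV Lf y by auto
      then show "F y = qcls act_0 (G y)" unfolding F_def using same GV Lf y by auto
    qed
    show "\<exists>U g. open U \<and> x \<in> U \<and> smooth_map (Lset c \<inter> U) AutP g \<and> (\<forall>y\<in>Lset c \<inter> U. F y = qcls act_0 (g y))"
      using V sm eq by blast
  qed
  have s6: "smooth_map AutP (Lset c) (Gq \<circ> qcls act_0)"
    unfolding smooth_map_def
  proof (intro conjI ballI)
    show "(Gq \<circ> qcls act_0) ` AutP \<subseteq> Lset c" using Gq hmap_Lset[OF c] by auto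
    fix x assume x: "x \<in> AutP"
    have "\<forall>y\<in>AutP \<inter> UA. hmap c y = (Gq \<circ> qcls act_0) y" using Gq by simp
    then show "\<exists>U g. open U \<and> x \<in> U \<and> smooth_on U g \<and> (\<forall>y\<in>AutP \<inter> U. g y = (Gq \<circ> qcls act_0) y)"
      using open_UA x AutP_UA smooth_hmap[OF c] by blast
  qed
  show ?thesis unfolding diffeo_sub_quot_def using s1 s2 s3 s4 s5 s6 by blast
qed

theorem theorem2p10:
  fixes c :: real
  assumes "0 < c" and "c < 1"
  shows "diffeo_sub_quot (Lset c) AutP act_0 \<and> diffeo_quot_quot AutP (act_c c) AutP act_0"
  using part1[OF assms] part2[OF assms] by blast

end
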